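(* Let $G$ be a finite simple graph with at least one edge. The following statements are equivalent: (1) $G$ has a matching that saturates every vertex of $\mathrm{core}(G)$; (2) $G$ has a minimum mitigating set which is a matching; (3) for every $S\subseteq \mathrm{core}(G)$, $\mathrm{es}_{\Delta}(G[N[S]])\leq \frac{|N[S]|}{2}$.
   Context: $\mathrm{core}(G)$ is the set of vertices of $G$ of maximum degree $\Delta(G)$. A set $S\subseteq E(G)$ is a mitigating set if $\Delta(G-S)\leq\Delta(G)-1$; a minimum mitigating set is one of minimum size. The $\Delta$-edge stability number $\mathrm{es}_{\Delta}(H)$ of a graph $H$ is the minimum number of edges whose removal results in a subgraph $H'$ with $\Delta(H')=\Delta(H)-1$. For $S\subseteq V(G)$, $N[S]=\bigcup_{v\in S}(N(v)\cup\{v\})$ is the closed neighborhood of $S$, and $G[N[S]]$ is the subgraph induced by it. *)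

theory Defs
  imports Complex_Main
begin

definition simple_graph :: "'a set \<Rightarrow> 'a set set \<Rightarrow> bool" where
  "simple_graph V E \<longleftrightarrow> finite V \<and> (\<forall>e\<in>E. e \<subseteq> V \<and> card e = 2)"

definition degree :: "'a set set \<Rightarrow> 'a \<Rightarrow> nat" where
  "degree E v = card {e \<in> E. v \<in> e}"

text \<open>Maximum degree; 0 for the graph with no vertices.\<close>
definition max_degree :: "'a set \<Rightarrow> 'a set set \<Rightarrow> nat" where
  "max_degree V E = Max (insert 0 (degree E ` V))"

definition core :: "'a set \<Rightarrow> 'a set set \<Rightarrow> 'a set" where
  "core V E = {v \<in> V. degree E v = max_degree V E}"

definition mitigating_set :: "'a set \<Rightarrow> 'a set set \<Rightarrow> 'a set set \<Rightarrow> bool" where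
  "mitigating_set V E S \<longleftrightarrow> S \<subseteq> E \<and> max_degree V (E - S) \<le> max_degree V E - 1"

definition min_mitigating_set :: "'a set \<Rightarrow> 'a set set \<Rightarrow> 'a set set \<Rightarrow> bool" where
  "min_mitigating_set V E S \<longleftrightarrow> mitigating_set V E S \<and>
     (\<forall>T. mitigating_set V E T \<longrightarrow> card S \<le> card T)"

definition matching :: "'a set set \<Rightarrow> 'a set set \<Rightarrow> bool" where
  "matching E M \<longleftrightarrow> M \<subseteq> E \<and> (\<forall>e1\<in>M. \<forall>e2\<in>M. e1 \<noteq> e2 \<longrightarrow> e1 \<inter> e2 = {})"

definition saturates :: "'a set set \<Rightarrow> 'a set \<Rightarrow> bool" where
  "saturates M X \<longleftrightarrow> (\<forall>v\<in>X. \<exists>e\<in>M. v \<in> e)"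

definition es_delta :: "'a set \<Rightarrow> 'a set set \<Rightarrow> nat" where
  "es_delta V E = (LEAST k. \<exists>S. S \<subseteq> E \<and> card S = k \<and>
      max_degree V (E - S) = max_degree V E - 1)"

definition closed_nbhd :: "'a set set \<Rightarrow> 'a set \<Rightarrow> 'a set" where
  "closed_nbhd E S = S \<union> {u. \<exists>v\<in>S. {u, v} \<in> E}"

definition induced_edges :: "'a set set \<Rightarrow> 'a set \<Rightarrow> 'a set set" where
  "induced_edges E X = {e \<in> E. e \<subseteq> X}"

end

theory Submission
  imports Defs
begin

definition bd :: "'a set set \<Rightarrow> 'a set \<Rightarrow> 'a set" where
  "bd E S = {u. \<exists>v\<in>S. {u,v} \<in> E} - S"

definition condC :: "'a set set \<Rightarrow> 'a set \<Rightarrow> bool" where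
  "condC E X = (\<forall>S\<subseteq>X. \<exists>N. matching E N \<and> \<Union>N \<subseteq> S \<and> card S \<le> 2 * card N + card (bd E S))"

definition sat :: "'a set set \<Rightarrow> 'a set \<Rightarrow> bool" where
  "sat E X = (\<exists>M. matching E M \<and> saturates M X)"

definition K2 :: "'a set \<Rightarrow> 'a set set" where
  "K2 V = {e. e \<subseteq> V \<and> card e = 2}"

lemma card2_eq: "card e = 2 \<Longrightarrow> \<exists>x y. x \<noteq> y \<and> e = {x,y}"
  by (auto simp: card_2_iff)

lemma card2_other: "card e = 2 \<Longrightarrow> x \<in> e \<Longrightarrow> \<exists>y. y \<noteq> x \<and> e = {x,y}"
  by (metis card_2_iff doubleton_eq_iff insertE singletonD)

lemma finite_K2: "finite V \<Longrightarrow> finite (K2 V)"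
  unfolding K2_def by (rule finite_subset[of _ "Pow V"]) auto

lemma matching_iff: "matching E M \<longleftrightarrow> M \<subseteq> E \<and> (\<forall>v e1 e2. e1 \<in> M \<longrightarrow> e2 \<in> M \<longrightarrow> v \<in> e1 \<longrightarrow> v \<in> e2 \<longrightarrow> e1 = e2)"
  unfolding matching_def by blast

lemma matching_card_Union:
  assumes "finite M" "\<forall>e\<in>M. card e = 2" "\<forall>e1\<in>M. \<forall>e2\<in>M. e1 \<noteq> e2 \<longrightarrow> e1 \<inter> e2 = {}"
  shows "card (\<Union>M) = 2 * card M"
proof -
  have fin: "\<forall>e\<in>M. finite e" using assms(2) card.infinite by fastforce
  have "card (\<Union>M) = (\<Sum>e\<in>M. card e)"
    by (rule card_Union_disjoint) (use assms fin in \<open>auto simp: pairwise_def disjnt_def\<close>)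
  also have "\<dots> = (\<Sum>e\<in>M. 2)" using assms(2) by simp
  finally show ?thesis by simp
qed

lemma condC_mono:
  assumes "condC E X" "E \<subseteq> E'" "finite V" "E' \<subseteq> K2 V"
  shows "condC E' X"
  unfolding condC_def
proof (intro allI impI)
  fix S assume "S \<subseteq> X"
  then obtain N where N: "matching E N" "\<Union>N \<subseteq> S" "card S \<le> 2 * card N + card (bd E S)"
    using assms(1) unfolding condC_def by blast
  have "bd E' S \<subseteq> V" using assms(4) unfolding bd_def K2_def by blast
  hence "finite (bd E' S)" using assms(3) finite_subset by blast
  moreover have "bd E S \<subseteq> bd E' S" using assms(2) unfolding bd_def by blast
  ultimately have "card (bd E S) \<le> card (bd E' S)" by (simp add: card_mono)
  moreover have "matching E' N" using N(1) assms(2) unfolding matching_def by blast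
  ultimately show "\<exists>N. matching E' N \<and> \<Union>N \<subseteq> S \<and> card S \<le> 2 * card N + card (bd E' S)"
    using N by force
qed

definition adj :: "'a set set \<Rightarrow> ('a \<times> 'a) set" where
  "adj F = {(u,v). {u,v} \<in> F}"

lemma reach_sub: "(v,w) \<in> (adj F)\<^sup>* \<Longrightarrow> w \<in> insert v (\<Union>F)"
  by (induction rule: rtrancl_induct) (auto simp: adj_def)

lemma finite_reach: "finite F \<Longrightarrow> \<forall>e\<in>F. finite e \<Longrightarrow> finite ((adj F)\<^sup>* `` {v})"
  by (rule finite_subset[of _ "insert v (\<Union>F)"]) (auto dest: reach_sub)

lemma degree0_none: "finite F \<Longrightarrow> degree F v = 0 \<Longrightarrow> e \<in> F \<Longrightarrow> v \<notin> e"
  unfolding degree_def by auto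

lemma reach_deg0: assumes "finite F" "degree F v = 0" shows "(adj F)\<^sup>* `` {v} = {v}"
proof -
  have "w = v" if "(v,w) \<in> (adj F)\<^sup>*" for w
    using that by (rule converse_rtranclE) (auto simp: adj_def dest: degree0_none[OF assms])
  thus ?thesis by auto
qed

lemma degree_mono: "finite F \<Longrightarrow> F' \<subseteq> F \<Longrightarrow> degree F' w \<le> degree F w"
  unfolding degree_def by (rule card_mono) auto

lemma path_low:
  assumes "finite F" "\<forall>e\<in>F. card e = 2" "\<forall>w. degree F w \<le> 2" "degree F v \<le> 1"
  shows "card {w \<in> (adj F)\<^sup>* `` {v}. degree F w \<le> 1} \<le> 2"
  using assms
proof (induction "card F" arbitrary: F v rule: less_induct)
  case less
  have finE: "\<forall>e\<in>F. finite e"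
  proof
    fix e assume "e \<in> F"
    hence "card e = 2" using less.prems(2) by blast
    thus "finite e" by (intro card_ge_0_finite) simp
  qed
  show ?case
  proof (cases "degree F v = 0")
    case True
    then have "{w \<in> (adj F)\<^sup>* `` {v}. degree F w \<le> 1} \<subseteq> {v}"
      using reach_deg0[OF less.prems(1) True] by auto
    hence "card {w \<in> (adj F)\<^sup>* `` {v}. degree F w \<le> 1} \<le> card {v}" by (intro card_mono) auto
    then show ?thesis by simp
  next
    case False
    with less.prems(4) have d1: "degree F v = 1" by simp
    obtain e where e: "{e'\<in>F. v \<in> e'} = {e}" using d1 unfolding degree_def by (rule card_1_singletonE)
    have "e \<in> {e'\<in>F. v \<in> e'}" using e by simp
    hence eF: "e \<in> F" "v \<in> e" by simp_all
    obtain v' where v': "v' \<noteq> v" "e = {v,v'}"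
      using card2_other[OF less.prems(2)[rule_format, OF eF(1)] eF(2)] by blast
    define F' where "F' = F - {e}"
    have cF': "card F' < card F" unfolding F'_def using eF(1) less.prems(1) by (rule card_Diff1_less[OF _ _, rotated])
    have finF': "finite F'" using less.prems(1) unfolding F'_def by simp
    have degw: "degree F' w = degree F w" if "w \<notin> e" for w
      unfolding degree_def F'_def using that by (intro arg_cong[where f=card]) auto
    have setv': "{e'\<in>F'. v' \<in> e'} = {e'\<in>F. v' \<in> e'} - {e}" unfolding F'_def by auto
    have degv': "degree F' v' = degree F v' - 1"
      unfolding degree_def setv' using eF v' less.prems(1) by (simp add: card_Diff_singleton)
    have "{e'\<in>F'. v \<in> e'} = {}" using e unfolding F'_def by blast
    hence degv0: "degree F' v = 0" unfolding degree_def by (metis card.empty)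
    have reach: "w \<in> insert v ((adj F')\<^sup>* `` {v'})" if "(v,w) \<in> (adj F)\<^sup>*" for w
      using that
    proof (induction rule: rtrancl_induct)
      case base then show ?case by simp
    next
      case (step y z)
      have yz: "{y,z} \<in> F" using step.hyps(2) by (simp add: adj_def)
      show ?case
      proof (cases "{y,z} = e")
        case True
        then show ?thesis using v' by (auto simp: doubleton_eq_iff)
      next
        case False
        hence yzF': "{y,z} \<in> F'" using yz unfolding F'_def by simp
        have "y \<noteq> v"
        proof
          assume "y = v"
          then have "{y,z} \<in> {e'\<in>F. v \<in> e'}" using yz by simp
          then show False using e False by simp
        qed
        hence "(v', y) \<in> (adj F')\<^sup>*" using step.IH by simp
        moreover have "(y,z) \<in> adj F'" using yzF' by (simp add: adj_def)
        ultimately show ?thesis by (meson ImageI rtrancl.rtrancl_into_rtrancl singletonI insertI2)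
      qed
    qed
    show ?thesis
    proof (cases "degree F v' \<le> 1")
      case True
      hence "degree F' v' = 0" using degv' by simp
      hence "(adj F')\<^sup>* `` {v'} = {v'}" by (rule reach_deg0[OF finF'])
      have "{w \<in> (adj F)\<^sup>* `` {v}. degree F w \<le> 1} \<subseteq> {v, v'}"
      proof
        fix w assume "w \<in> {w \<in> (adj F)\<^sup>* `` {v}. degree F w \<le> 1}"
        hence "(v,w) \<in> (adj F)\<^sup>*" by simp
        from reach[OF this] \<open>(adj F')\<^sup>* `` {v'} = {v'}\<close> show "w \<in> {v,v'}" by simp
      qed
      hence "card {w \<in> (adj F)\<^sup>* `` {v}. degree F w \<le> 1} \<le> card {v, v'}" by (intro card_mono) auto
      also have "\<dots> \<le> 2" by (simp add: card_insert_if)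
      finally show ?thesis .
    next
      case False
      hence d2: "degree F v' = 2" using less.prems(3)[rule_format, of v'] by linarith
      hence d1': "degree F' v' = 1" using degv' by simp
      have c2: "\<forall>e\<in>F'. card e = 2" using less.prems(2) unfolding F'_def by blast
      have dF': "\<forall>w. degree F' w \<le> 2"
      proof
        fix w
        have "degree F' w \<le> degree F w" unfolding F'_def by (rule degree_mono[OF less.prems(1)]) blast
        thus "degree F' w \<le> 2" using less.prems(3)[rule_format, of w] by linarith
      qed
      have d1'': "degree F' v' \<le> 1" using d1' by simp
      have IH: "card {w \<in> (adj F')\<^sup>* `` {v'}. degree F' w \<le> 1} \<le> 2"
        using less.hyps[OF cF' finF' c2 dF' d1''] .
      define L' where "L' = {w \<in> (adj F')\<^sup>* `` {v'}. degree F' w \<le> 1}"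
      have "finite ((adj F')\<^sup>* `` {v'})"
        by (rule finite_reach[OF finF']) (use finE in \<open>simp add: F'_def\<close>)
      hence finL': "finite L'" unfolding L'_def by (rule finite_subset[rotated]) blast
      have v'L': "v' \<in> L'" unfolding L'_def using d1' by simp
      have "card (L' - {v'}) \<le> 1" using IH v'L' finL' unfolding L'_def[symmetric] by (simp add: card_Diff_singleton)
      have "{w \<in> (adj F)\<^sup>* `` {v}. degree F w \<le> 1} \<subseteq> insert v (L' - {v'})"
      proof
        fix w assume w: "w \<in> {w \<in> (adj F)\<^sup>* `` {v}. degree F w \<le> 1}"
        show "w \<in> insert v (L' - {v'})"
        proof (cases "w = v")
          case False
          have "(v,w) \<in> (adj F)\<^sup>*" using w by simp
          hence wr: "w \<in> (adj F')\<^sup>* `` {v'}" using reach False by blast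
          have "degree F w \<le> 1" using w by simp
          hence "w \<noteq> v'" using d2 by auto
          have "w \<notin> e" using \<open>w \<noteq> v\<close> \<open>w \<noteq> v'\<close> v'(2) by simp
          hence "degree F' w \<le> 1" using degw \<open>degree F w \<le> 1\<close> by simp
          then show ?thesis using wr \<open>w \<noteq> v'\<close> unfolding L'_def by simp
        qed simp
      qed
      hence "card {w \<in> (adj F)\<^sup>* `` {v}. degree F w \<le> 1} \<le> card (insert v (L' - {v'}))"
        using finL' by (intro card_mono) auto
      also have "\<dots> \<le> Suc (card (L' - {v'}))" using finL' by (simp add: card_insert_if)
      finally show ?thesis using \<open>card (L' - {v'}) \<le> 1\<close> by simp
    qed
  qed
qed

definition vm :: "'a set set \<Rightarrow> bool" where
  "vm M = (\<forall>v e1 e2. e1 \<in> M \<longrightarrow> e2 \<in> M \<longrightarrow> v \<in> e1 \<longrightarrow> v \<in> e2 \<longrightarrow> e1 = e2)"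

lemma matching_vm: "matching E M \<longleftrightarrow> M \<subseteq> E \<and> vm M"
  unfolding matching_def vm_def by blast

lemma vmD: "vm M \<Longrightarrow> e1 \<in> M \<Longrightarrow> e2 \<in> M \<Longrightarrow> v \<in> e1 \<Longrightarrow> v \<in> e2 \<Longrightarrow> e1 = e2"
  unfolding vm_def by blast

lemma swap_closed:
  assumes P: "vm P" and Q: "vm Q" and sP: "saturates P X" and sQ: "saturates Q X"
    and RD: "R \<subseteq> (P - Q) \<union> (Q - P)"
    and cl: "\<And>v e. e \<in> (P - Q) \<union> (Q - P) \<Longrightarrow> v \<in> e \<Longrightarrow> (\<exists>e'\<in>R. v \<in> e') \<Longrightarrow> e \<in> R"
  shows "vm ((P - R) \<union> (Q \<inter> R)) \<and> saturates ((P - R) \<union> (Q \<inter> R)) X"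
proof
  show "vm ((P - R) \<union> (Q \<inter> R))"
    unfolding vm_def
  proof (intro allI impI)
    fix v e1 e2
    assume e1: "e1 \<in> (P - R) \<union> (Q \<inter> R)" and e2: "e2 \<in> (P - R) \<union> (Q \<inter> R)" and v1: "v \<in> e1" and v2: "v \<in> e2"
    have mixed: False if a: "a \<in> P - R" and b: "b \<in> Q \<inter> R" and "v \<in> a" "v \<in> b" for a b
    proof -
      have "a \<notin> (P - Q) \<union> (Q - P)" using cl[of a v] a b \<open>v \<in> a\<close> \<open>v \<in> b\<close> by blast
      hence "a \<in> Q" using a by blast
      hence "a = b" using vmD[OF Q] b \<open>v \<in> a\<close> \<open>v \<in> b\<close> by blast
      thus False using a b by blast
    qed
    show "e1 = e2"
    proof (cases "e1 \<in> P - R")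
      case True
      show ?thesis
      proof (cases "e2 \<in> P - R")
        case True
        then show ?thesis using \<open>e1 \<in> P - R\<close> vmD[OF P] v1 v2 by blast
      next
        case False
        then show ?thesis using mixed[of e1 e2] True e2 v1 v2 by blast
      qed
    next
      case False
      hence e1Q: "e1 \<in> Q \<inter> R" using e1 by blast
      show ?thesis
      proof (cases "e2 \<in> P - R")
        case True
        then show ?thesis using mixed[of e2 e1] e1Q v1 v2 by blast
      next
        case False
        then show ?thesis using e1Q e2 vmD[OF Q] v1 v2 by blast
      qed
    qed
  qed
  show "saturates ((P - R) \<union> (Q \<inter> R)) X"
    unfolding saturates_def
  proof
    fix v assume "v \<in> X"
    then obtain ep eq where ep: "ep \<in> P" "v \<in> ep" and eq: "eq \<in> Q" "v \<in> eq"
      using sP sQ unfolding saturates_def by blast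
    show "\<exists>e\<in>(P - R) \<union> (Q \<inter> R). v \<in> e"
    proof (cases "ep \<in> R")
      case False then show ?thesis using ep by blast
    next
      case True
      show ?thesis
      proof (cases "eq \<in> (P - Q) \<union> (Q - P)")
        case True
        hence "eq \<in> R" using cl[of eq v] eq ep \<open>ep \<in> R\<close> by blast
        then show ?thesis using eq by blast
      next
        case False
        hence "eq \<in> P" using eq by blast
        hence "eq = ep" using vmD[OF P] ep eq by blast
        hence "eq \<in> R" using True by simp
        then show ?thesis using eq by blast
      qed
    qed
  qed
qed

lemma swap2:
  assumes P: "vm P" and Q: "vm Q" and sP: "saturates P X" and sQ: "saturates Q X"
    and pq: "{p,q} \<in> P" "p \<noteq> q"
    and RD: "R \<subseteq> ((P - Q) \<union> (Q - P)) - {{p,q}}"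
    and rp: "r \<noteq> p" "r \<noteq> q"
    and qR: "\<exists>e\<in>R. q \<in> e" and rR: "\<exists>e\<in>R. r \<in> e" and pR: "\<not> (\<exists>e\<in>R. p \<in> e)"
    and rQ: "\<And>e. e \<in> Q \<Longrightarrow> r \<in> e \<Longrightarrow> e \<notin> R"
    and cl: "\<And>v e. e \<in> (P - Q) \<union> (Q - P) \<Longrightarrow> v \<in> e \<Longrightarrow> (\<exists>e'\<in>R. v \<in> e') \<Longrightarrow> v \<noteq> q \<Longrightarrow> v \<noteq> r \<Longrightarrow> e \<in> R"
  shows "vm ((P - R - {{p,q}}) \<union> (Q \<inter> R) \<union> {{p,r}}) \<and> saturates ((P - R - {{p,q}}) \<union> (Q \<inter> R) \<union> {{p,r}}) X"
proof
  define A where "A = P - R - {{p,q}}"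
  define B where "B = Q \<inter> R"
  have Pp: "e = {p,q}" if "e \<in> P" "p \<in> e" for e using vmD[OF P that(1) pq(1)] that(2) by simp
  have Pq: "e = {p,q}" if "e \<in> P" "q \<in> e" for e using vmD[OF P that(1) pq(1)] that(2) by simp
  obtain er where er: "er \<in> R" "r \<in> er" using rR by blast
  have erP: "er \<in> P" using er rQ RD by blast
  have AB: False if a: "a \<in> A" and b: "b \<in> B" and "v \<in> a" "v \<in> b" for a b v
  proof -
    have vR: "\<exists>e'\<in>R. v \<in> e'" using b \<open>v \<in> b\<close> unfolding B_def by blast
    have aP: "a \<in> P" "a \<notin> R" "a \<noteq> {p,q}" using a unfolding A_def by auto
    show False
    proof (cases "v = q")
      case True then show False using Pq[OF aP(1)] \<open>v \<in> a\<close> aP(3) by simp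
    next
      case vq: False
      show False
      proof (cases "v = r")
        case True then show False using rQ b \<open>v \<in> b\<close> unfolding B_def by blast
      next
        case False
        have "a \<notin> (P - Q) \<union> (Q - P)" using cl[of a v] vR vq False \<open>v \<in> a\<close> aP(2) by blast
        hence "a \<in> Q" using aP(1) by blast
        hence "a = b" using vmD[OF Q] b \<open>v \<in> a\<close> \<open>v \<in> b\<close> unfolding B_def by blast
        thus False using aP(2) b unfolding B_def by blast
      qed
    qed
  qed
  have AC: False if a: "a \<in> A" and "v \<in> a" "v \<in> {p,r}" for a v
  proof -
    have aP: "a \<in> P" "a \<notin> R" "a \<noteq> {p,q}" using a unfolding A_def by auto
    show False
    proof (cases "v = p")
      case True then show False using Pp[OF aP(1)] \<open>v \<in> a\<close> aP(3) by simp
    next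
      case False
      hence "v = r" using \<open>v \<in> {p,r}\<close> by simp
      hence "a = er" using vmD[OF P aP(1) erP] \<open>v \<in> a\<close> er(2) by simp
      thus False using er(1) aP(2) by simp
    qed
  qed
  have BC: False if b: "b \<in> B" and "v \<in> b" "v \<in> {p,r}" for b v
  proof (cases "v = p")
    case True then show False using pR b \<open>v \<in> b\<close> unfolding B_def by blast
  next
    case False
    hence "v = r" using \<open>v \<in> {p,r}\<close> by simp
    then show False using rQ b \<open>v \<in> b\<close> unfolding B_def by blast
  qed
  show "vm ((P - R - {{p,q}}) \<union> (Q \<inter> R) \<union> {{p,r}})"
    unfolding A_def[symmetric] B_def[symmetric] vm_def
  proof (intro allI impI)
    fix v e1 e2
    assume e1: "e1 \<in> A \<union> B \<union> {{p,r}}" and e2: "e2 \<in> A \<union> B \<union> {{p,r}}" and v1: "v \<in> e1" and v2: "v \<in> e2"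
    have AA: "e1 = e2" if "e1 \<in> A" "e2 \<in> A" using that vmD[OF P] v1 v2 unfolding A_def by blast
    have BB: "e1 = e2" if "e1 \<in> B" "e2 \<in> B" using that vmD[OF Q] v1 v2 unfolding B_def by blast
    show "e1 = e2"
      using e1 e2 AA BB AB[of e1 e2 v] AB[of e2 e1 v] AC[of e1 v] AC[of e2 v] BC[of e1 v] BC[of e2 v] v1 v2
      by blast
  qed
  show "saturates ((P - R - {{p,q}}) \<union> (Q \<inter> R) \<union> {{p,r}}) X"
    unfolding A_def[symmetric] B_def[symmetric] saturates_def
  proof
    fix v assume "v \<in> X"
    then obtain ep eq where ep: "ep \<in> P" "v \<in> ep" and eq: "eq \<in> Q" "v \<in> eq"
      using sP sQ unfolding saturates_def by blast
    show "\<exists>e\<in>A \<union> B \<union> {{p,r}}. v \<in> e"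
    proof (cases "v = p \<or> v = r")
      case True then show ?thesis by blast
    next
      case npr: False
      show ?thesis
      proof (cases "v = q")
        case True
        obtain e where e: "e \<in> R" "q \<in> e" using qR by blast
        have "e \<notin> P" using Pq e RD by blast
        hence "e \<in> Q" using e RD by blast
        then show ?thesis using e True unfolding B_def by blast
      next
        case nq: False
        show ?thesis
        proof (cases "ep \<in> R")
          case False
          have "ep \<noteq> {p,q}" using ep(2) npr nq by auto
          then show ?thesis using ep False unfolding A_def by blast
        next
          case True
          show ?thesis
          proof (cases "eq \<in> R")
            case True then show ?thesis using eq unfolding B_def by blast
          next
            case False
            have "eq \<notin> (P - Q) \<union> (Q - P)"
              using cl[of eq v] eq ep \<open>ep \<in> R\<close> npr nq False by blast
            hence "eq \<in> P" using eq by blast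
            hence "eq = ep" using vmD[OF P] ep eq by blast
            then show ?thesis using False True by simp
          qed
        qed
      qed
    qed
  qed
qed

definition vcomp :: "'a set set \<Rightarrow> 'a \<Rightarrow> 'a set" where
  "vcomp F z = (adj F)\<^sup>* `` {z}"

definition Ecomp :: "'a set set \<Rightarrow> 'a \<Rightarrow> 'a set set" where
  "Ecomp F z = {e \<in> F. e \<subseteq> vcomp F z}"

lemma adj_sym: "(x,y) \<in> adj F \<Longrightarrow> (y,x) \<in> adj F"
  unfolding adj_def by (simp add: insert_commute)

lemma rtrancl_adj_sym: "(x,y) \<in> (adj F)\<^sup>* \<Longrightarrow> (y,x) \<in> (adj F)\<^sup>*"
proof (induction rule: rtrancl_induct)
  case base then show ?case by simp
next
  case (step y z)
  show ?case by (rule converse_rtrancl_into_rtrancl[OF adj_sym[OF step.hyps(2)] step.IH])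
qed

lemma comp_self: "z \<in> vcomp F z" unfolding vcomp_def by simp

lemma comp_sym: "x \<in> vcomp F z \<Longrightarrow> z \<in> vcomp F x"
  unfolding vcomp_def by (auto intro: rtrancl_adj_sym)

lemma comp_edge:
  assumes "\<forall>e\<in>F. card e = 2" "e \<in> F" "v \<in> e" "v \<in> vcomp F z"
  shows "e \<in> Ecomp F z"
proof -
  obtain w where w: "w \<noteq> v" "e = {v,w}" using card2_other[OF assms(1)[rule_format, OF assms(2)] assms(3)] by blast
  have "(v,w) \<in> adj F" using assms(2) w by (simp add: adj_def)
  moreover have "(z,v) \<in> (adj F)\<^sup>*" using assms(4) unfolding vcomp_def by simp
  ultimately have "(z,w) \<in> (adj F)\<^sup>*" by (simp add: rtrancl.rtrancl_into_rtrancl)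
  hence "w \<in> vcomp F z" unfolding vcomp_def by simp
  thus ?thesis using assms(2,4) w unfolding Ecomp_def by simp
qed

lemma Ecomp_touch: "e \<in> Ecomp F z \<Longrightarrow> v \<in> e \<Longrightarrow> v \<in> vcomp F z"
  unfolding Ecomp_def by blast

lemma comp_touch:
  assumes "x \<in> vcomp F z" "x \<noteq> z"
  shows "(\<exists>e\<in>Ecomp F z. x \<in> e) \<and> (\<exists>e\<in>Ecomp F z. z \<in> e)"
proof
  have r: "(z,x) \<in> (adj F)\<^sup>*" using assms(1) unfolding vcomp_def by simp
  then obtain w where w: "(z,w) \<in> (adj F)\<^sup>*" "(w,x) \<in> adj F"
    using assms(2) by (metis rtranclE)
  hence "{w,x} \<in> F" by (simp add: adj_def)
  moreover have "w \<in> vcomp F z" "x \<in> vcomp F z" using w r unfolding vcomp_def by auto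
  ultimately show "\<exists>e\<in>Ecomp F z. x \<in> e" unfolding Ecomp_def by blast
next
  have r: "(z,x) \<in> (adj F)\<^sup>*" using assms(1) unfolding vcomp_def by simp
  then obtain w where w: "(z,w) \<in> adj F" "(w,x) \<in> (adj F)\<^sup>*"
    using assms(2) by (metis converse_rtranclE)
  hence "{z,w} \<in> F" by (simp add: adj_def)
  moreover have "w \<in> vcomp F z" using w unfolding vcomp_def by auto
  ultimately show "\<exists>e\<in>Ecomp F z. z \<in> e" unfolding Ecomp_def using comp_self[of z F] by blast
qed

lemma vm_degree: "vm M \<Longrightarrow> finite M \<Longrightarrow> degree M w \<le> 1"
proof -
  assume a: "vm M" "finite M"
  have "\<forall>a1\<in>{e\<in>M. w\<in>e}. \<forall>a2\<in>{e\<in>M. w\<in>e}. a1 = a2" using vmD[OF a(1)] by blast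
  hence "card {e\<in>M. w\<in>e} \<le> Suc 0" using a(2) by (subst card_le_Suc0_iff_eq) auto
  thus ?thesis unfolding degree_def by simp
qed

lemma degree_sub: "finite M \<Longrightarrow> {e\<in>F. w\<in>e} \<subseteq> {e\<in>M. w\<in>e} \<Longrightarrow> degree F w \<le> degree M w"
  unfolding degree_def by (rule card_mono) auto

lemma three_le:
  assumes "finite L" "card L \<le> 2" "x \<in> L" "y \<in> L" "z \<in> L" "x \<noteq> y" "x \<noteq> z" "y \<noteq> z"
  shows False
proof -
  have "card {x,y,z} \<le> card L" using assms by (intro card_mono) auto
  moreover have "card {x,y,z} = 3" using assms by simp
  ultimately show False using assms(2) by simp
qed

lemma sat_from_vm: "vm M \<Longrightarrow> M \<subseteq> E \<Longrightarrow> saturates M X \<Longrightarrow> sat E X"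
  unfolding sat_def matching_vm by blast

lemma lovasz_T:
  fixes V :: "'a set" and E :: "'a set set"
  assumes finV: "finite V" and EK: "E \<subseteq> K2 V"
    and nsat: "\<not> sat E X"
    and ext: "\<And>e. e \<in> K2 V \<Longrightarrow> e \<notin> E \<Longrightarrow> sat (insert e E) X"
    and inV: "a \<in> V" "b \<in> V" "c \<in> V" "d \<in> V"
    and ab: "{a,b} \<in> E" and bc: "{b,c} \<in> E" and ac: "a \<noteq> c" "{a,c} \<notin> E"
    and bd: "d \<noteq> b" "{b,d} \<notin> E"
  shows False
proof -
  have Ecard: "card e = 2" if "e \<in> E" for e using that EK unfolding K2_def by auto
  have "a \<noteq> b" using Ecard[OF ab] by (cases "a = b") auto
  have "b \<noteq> c" using Ecard[OF bc] by (cases "b = c") auto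
  have "d \<noteq> a" using ab bd by (auto simp: insert_commute)
  have "d \<noteq> c" using bc bd by auto
  have acK: "{a,c} \<in> K2 V" unfolding K2_def using inV ac by auto
  have bdK: "{b,d} \<in> K2 V" unfolding K2_def using inV bd by auto
  obtain M1 where M1: "matching (insert {a,c} E) M1" "saturates M1 X"
    using ext[OF acK ac(2)] unfolding sat_def by blast
  obtain M2 where M2: "matching (insert {b,d} E) M2" "saturates M2 X"
    using ext[OF bdK bd(2)] unfolding sat_def by blast
  have vm1: "vm M1" and sub1: "M1 \<subseteq> insert {a,c} E" using M1(1) unfolding matching_vm by auto
  have vm2: "vm M2" and sub2: "M2 \<subseteq> insert {b,d} E" using M2(1) unfolding matching_vm by auto
  have acM1: "{a,c} \<in> M1"
  proof (rule ccontr)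
    assume "{a,c} \<notin> M1"
    hence "M1 \<subseteq> E" using sub1 by blast
    thus False using sat_from_vm[OF vm1 _ M1(2)] nsat by blast
  qed
  have bdM2: "{b,d} \<in> M2"
  proof (rule ccontr)
    assume "{b,d} \<notin> M2"
    hence "M2 \<subseteq> E" using sub2 by blast
    thus False using sat_from_vm[OF vm2 _ M2(2)] nsat by blast
  qed
  have acbd: "{a,c} \<noteq> {b,d}" using \<open>a \<noteq> b\<close> \<open>b \<noteq> c\<close> by (auto simp: doubleton_eq_iff)
  have acM2: "{a,c} \<notin> M2" using sub2 ac(2) acbd by blast
  have bdM1: "{b,d} \<notin> M1" using sub1 bd(2) acbd by blast
  have K2fin: "finite (K2 V)" using finite_K2[OF finV] .
  have fin1: "finite M1" using sub1 EK acK K2fin by (meson finite_subset insert_subset)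
  have fin2: "finite M2" using sub2 EK bdK K2fin by (meson finite_subset insert_subset)
  define D where "D = (M1 - M2) \<union> (M2 - M1)"
  define D0 where "D0 = D - {{a,c},{b,d}}"
  have D0sub: "D0 \<subseteq> M1 \<union> M2" unfolding D0_def D_def by blast
  have finD0: "finite D0" using D0sub fin1 fin2 by (meson finite_UnI finite_subset)
  have card12: "card e = 2" if "e \<in> M1 \<union> M2" for e
  proof -
    have "e \<in> K2 V" using that sub1 sub2 EK acK bdK by blast
    thus ?thesis unfolding K2_def by simp
  qed
  have D0K: "\<forall>e\<in>D0. card e = 2" using D0sub card12 by blast
  have degD0: "\<forall>w. degree D0 w \<le> 2"
  proof
    fix w
    have "degree D0 w \<le> card ({e\<in>M1. w\<in>e} \<union> {e\<in>M2. w\<in>e})"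
      unfolding degree_def using fin1 fin2 D0sub by (intro card_mono) auto
    also have "\<dots> \<le> degree M1 w + degree M2 w" unfolding degree_def by (rule card_Un_le)
    also have "\<dots> \<le> 2" using vm_degree[OF vm1 fin1, of w] vm_degree[OF vm2 fin2, of w] by simp
    finally show "degree D0 w \<le> 2" .
  qed
  have M1a: "e = {a,c}" if "e \<in> M1" "a \<in> e" for e using vmD[OF vm1 that(1) acM1] that(2) by simp
  have M1c: "e = {a,c}" if "e \<in> M1" "c \<in> e" for e using vmD[OF vm1 that(1) acM1] that(2) by simp
  have M2b: "e = {b,d}" if "e \<in> M2" "b \<in> e" for e using vmD[OF vm2 that(1) bdM2] that(2) by simp
  have M2d: "e = {b,d}" if "e \<in> M2" "d \<in> e" for e using vmD[OF vm2 that(1) bdM2] that(2) by simp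
  have lowa: "degree D0 a \<le> 1"
  proof -
    have "{e\<in>D0. a\<in>e} \<subseteq> {e\<in>M2. a\<in>e}" using M1a D0sub unfolding D0_def by blast
    thus ?thesis using degree_sub[OF fin2] vm_degree[OF vm2 fin2, of a] le_trans by blast
  qed
  have lowc: "degree D0 c \<le> 1"
  proof -
    have "{e\<in>D0. c\<in>e} \<subseteq> {e\<in>M2. c\<in>e}" using M1c D0sub unfolding D0_def by blast
    thus ?thesis using degree_sub[OF fin2] vm_degree[OF vm2 fin2, of c] le_trans by blast
  qed
  have lowb: "degree D0 b \<le> 1"
  proof -
    have "{e\<in>D0. b\<in>e} \<subseteq> {e\<in>M1. b\<in>e}" using M2b D0sub unfolding D0_def by blast
    thus ?thesis using degree_sub[OF fin1] vm_degree[OF vm1 fin1, of b] le_trans by blast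
  qed
  have lowd: "degree D0 d \<le> 1"
  proof -
    have "{e\<in>D0. d\<in>e} \<subseteq> {e\<in>M1. d\<in>e}" using M2d D0sub unfolding D0_def by blast
    thus ?thesis using degree_sub[OF fin1] vm_degree[OF vm1 fin1, of d] le_trans by blast
  qed
  have finE0: "\<forall>e\<in>D0. finite e" using D0K by (simp add: card_ge_0_finite)
  have Lfin: "finite {w \<in> vcomp D0 z. degree D0 w \<le> 1}" for z
    using finite_reach[OF finD0 finE0, of z] unfolding vcomp_def by (rule finite_subset[rotated]) blast
  have Lcard: "card {w \<in> vcomp D0 z. degree D0 w \<le> 1} \<le> 2" if "degree D0 z \<le> 1" for z
    unfolding vcomp_def by (rule path_low[OF finD0 D0K degD0 that])
  have three: False if "degree D0 z \<le> 1" "x \<in> vcomp D0 z" "y \<in> vcomp D0 z" "w \<in> vcomp D0 z"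
      "degree D0 x \<le> 1" "degree D0 y \<le> 1" "degree D0 w \<le> 1" "x \<noteq> y" "x \<noteq> w" "y \<noteq> w" for z x y w
    by (rule three_le[OF Lfin Lcard[OF that(1)], of x y w]) (use that in auto)
  have cl0: "e \<in> Ecomp D0 z" if "e \<in> D" "v \<in> e" "v \<in> vcomp D0 z" "v \<notin> {a,b,c,d}" for e v z
  proof -
    have "e \<in> D0" using that unfolding D0_def by auto
    thus ?thesis using comp_edge[OF D0K _ that(2,3)] by blast
  qed
  have EcD0: "Ecomp D0 z \<subseteq> D0" for z unfolding Ecomp_def by blast
  have D0E1: "e \<in> E" if "e \<in> M1" "e \<in> D0" for e using that sub1 unfolding D0_def by blast
  have D0E2: "e \<in> E" if "e \<in> M2" "e \<in> D0" for e using that sub2 unfolding D0_def by blast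
  have dcomp: "d \<in> vcomp D0 d" by (rule comp_self)
  have bcomp: "b \<in> vcomp D0 b" by (rule comp_self)
  have caseA: False if x: "x \<in> {a,c}" "x' \<in> {a,c}" "x \<noteq> x'" "x \<in> vcomp D0 d" for x x'
  proof -
    have acx: "{a,c} = {x,x'}" using x by auto
    have lowx: "degree D0 x \<le> 1" "degree D0 x' \<le> 1" using x lowa lowc by auto
    have xd: "x \<noteq> d" "x' \<noteq> d" "x \<noteq> b" "x' \<noteq> b" using x \<open>d \<noteq> a\<close> \<open>d \<noteq> c\<close> \<open>a \<noteq> b\<close> \<open>b \<noteq> c\<close> by auto
    have nb: "b \<notin> vcomp D0 d"
      using three[OF lowd dcomp _ x(4) lowd lowb lowx(1)] xd bd(1) by auto
    have nx': "x' \<notin> vcomp D0 d"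
      using three[OF lowd dcomp _ x(4) lowd lowx(2) lowx(1)] xd x(3) by auto
    define R where "R = Ecomp D0 d"
    have tch: "(\<exists>e\<in>R. x \<in> e) \<and> (\<exists>e\<in>R. d \<in> e)" unfolding R_def by (rule comp_touch[OF x(4) xd(1)])
    have sw: "vm ((M2 - R - {{b,d}}) \<union> (M1 \<inter> R) \<union> {{b,x}}) \<and> saturates ((M2 - R - {{b,d}}) \<union> (M1 \<inter> R) \<union> {{b,x}}) X"
    proof (rule swap2[OF vm2 vm1 M2(2) M1(2) bdM2 bd(1)[symmetric]])
      show "R \<subseteq> (M2 - M1) \<union> (M1 - M2) - {{b, d}}" using EcD0[of d] unfolding R_def D0_def D_def by blast
      show "x \<noteq> b" "x \<noteq> d" using xd by auto
      show "\<exists>e\<in>R. d \<in> e" "\<exists>e\<in>R. x \<in> e" using tch by auto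
      show "\<not> (\<exists>e\<in>R. b \<in> e)" using nb Ecomp_touch unfolding R_def by metis
      show "e \<notin> R" if "e \<in> M1" "x \<in> e" for e
      proof -
        have "e = {a,c}" using x(1) M1a M1c that by blast
        thus ?thesis using EcD0[of d] unfolding R_def D0_def by blast
      qed
      show "e \<in> R" if "e \<in> (M2 - M1) \<union> (M1 - M2)" "v \<in> e" "\<exists>e'\<in>R. v \<in> e'" "v \<noteq> d" "v \<noteq> x" for v e
      proof -
        have vc: "v \<in> vcomp D0 d" using that(3) Ecomp_touch unfolding R_def by metis
        have "v \<noteq> b" "v \<noteq> x'" using vc nb nx' by auto
        hence "v \<notin> {a,b,c,d}" using that(4,5) acx by auto
        moreover have "e \<in> D" using that(1) unfolding D_def by blast
        ultimately show ?thesis using cl0 that(2) vc unfolding R_def by blast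
      qed
    qed
    have "(M2 - R - {{b,d}}) \<union> (M1 \<inter> R) \<union> {{b,x}} \<subseteq> E"
    proof -
      have "M2 - R - {{b,d}} \<subseteq> E" using sub2 by blast
      moreover have "M1 \<inter> R \<subseteq> E" using D0E1 EcD0[of d] unfolding R_def by blast
      moreover have "{b,x} \<in> E" using x(1) ab bc by (auto simp: insert_commute)
      ultimately show ?thesis by (simp only: Un_subset_iff insert_subset empty_subsetI simp_thms)
    qed
    thus False using sat_from_vm sw nsat by blast
  qed
  have na: "a \<notin> vcomp D0 d" using caseA[of a c] ac(1) by blast
  have nc: "c \<notin> vcomp D0 d" using caseA[of c a] ac(1) by blast
  have caseB: False if bc': "b \<in> vcomp D0 d"
  proof -
    define R where "R = Ecomp D0 d \<union> {{b,d}}"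
    have sw: "vm ((M2 - R) \<union> (M1 \<inter> R)) \<and> saturates ((M2 - R) \<union> (M1 \<inter> R)) X"
    proof (rule swap_closed[OF vm2 vm1 M2(2) M1(2)])
      show "R \<subseteq> (M2 - M1) \<union> (M1 - M2)" using EcD0[of d] bdM2 bdM1 unfolding R_def D0_def D_def by blast
      show "e \<in> R" if h: "e \<in> (M2 - M1) \<union> (M1 - M2)" "v \<in> e" "\<exists>e'\<in>R. v \<in> e'" for v e
      proof -
        have vc: "v \<in> vcomp D0 d"
        proof -
          obtain e' where e': "e' \<in> R" "v \<in> e'" using h(3) by blast
          show ?thesis
          proof (cases "e' = {b,d}")
            case True then show ?thesis using e'(2) bc' dcomp by auto
          next
            case False
            hence "e' \<in> Ecomp D0 d" using e' unfolding R_def by blast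
            then show ?thesis using Ecomp_touch e'(2) by metis
          qed
        qed
        show ?thesis
        proof (cases "e = {b,d}")
          case True then show ?thesis unfolding R_def by simp
        next
          case False
          have "e \<noteq> {a,c}" using h(2) vc na nc by auto
          hence "e \<in> D0" using False h(1) unfolding D0_def D_def by blast
          thus ?thesis using comp_edge[OF D0K _ h(2) vc] unfolding R_def by blast
        qed
      qed
    qed
    have "(M2 - R) \<union> (M1 \<inter> R) \<subseteq> E"
    proof -
      have "M2 - R \<subseteq> E" using sub2 unfolding R_def by blast
      moreover have "M1 \<inter> R \<subseteq> E" using D0E1 EcD0[of d] bdM1 unfolding R_def by blast
      ultimately show ?thesis by blast
    qed
    thus False using sat_from_vm sw nsat by blast
  qed
  have nb: "b \<notin> vcomp D0 d" using caseB by blast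
  have nd: "d \<notin> vcomp D0 b" using nb comp_sym by metis
  have caseC: False if x: "x \<in> {a,c}" "x' \<in> {a,c}" "x \<noteq> x'" "x \<in> vcomp D0 b" for x x'
  proof -
    have acx: "{a,c} = {x',x}" using x by auto
    have lowx: "degree D0 x \<le> 1" "degree D0 x' \<le> 1" using x lowa lowc by auto
    have xd: "x \<noteq> d" "x' \<noteq> d" "x \<noteq> b" "x' \<noteq> b" using x \<open>d \<noteq> a\<close> \<open>d \<noteq> c\<close> \<open>a \<noteq> b\<close> \<open>b \<noteq> c\<close> by auto
    have nx': "x' \<notin> vcomp D0 b"
      using three[OF lowb bcomp _ x(4) lowb lowx(2) lowx(1)] xd x(3) by auto
    define R where "R = Ecomp D0 b"
    have tch: "(\<exists>e\<in>R. x \<in> e) \<and> (\<exists>e\<in>R. b \<in> e)" unfolding R_def by (rule comp_touch[OF x(4) xd(3)])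
    have x'xM1: "{x',x} \<in> M1" using acM1 acx by simp
    have sw: "vm ((M1 - R - {{x',x}}) \<union> (M2 \<inter> R) \<union> {{x',b}}) \<and> saturates ((M1 - R - {{x',x}}) \<union> (M2 \<inter> R) \<union> {{x',b}}) X"
    proof (rule swap2[OF vm1 vm2 M1(2) M2(2) x'xM1])
      show "x' \<noteq> x" using x(3) by simp
      show "R \<subseteq> (M1 - M2) \<union> (M2 - M1) - {{x', x}}" using EcD0[of b] acx unfolding R_def D0_def D_def by blast
      show "b \<noteq> x'" "b \<noteq> x" using xd by auto
      show "\<exists>e\<in>R. x \<in> e" "\<exists>e\<in>R. b \<in> e" using tch by auto
      show "\<not> (\<exists>e\<in>R. x' \<in> e)" using nx' Ecomp_touch unfolding R_def by metis
      show "e \<notin> R" if "e \<in> M2" "b \<in> e" for e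
      proof -
        have "e = {b,d}" using M2b that by blast
        thus ?thesis using EcD0[of b] unfolding R_def D0_def by blast
      qed
      show "e \<in> R" if "e \<in> (M1 - M2) \<union> (M2 - M1)" "v \<in> e" "\<exists>e'\<in>R. v \<in> e'" "v \<noteq> x" "v \<noteq> b" for v e
      proof -
        have vc: "v \<in> vcomp D0 b" using that(3) Ecomp_touch unfolding R_def by metis
        have "v \<noteq> d" "v \<noteq> x'" using vc nd nx' by auto
        hence "v \<notin> {a,b,c,d}" using that(4,5) acx by auto
        moreover have "e \<in> D" using that(1) unfolding D_def by blast
        ultimately show ?thesis using cl0 that(2) vc unfolding R_def by blast
      qed
    qed
    have "(M1 - R - {{x',x}}) \<union> (M2 \<inter> R) \<union> {{x',b}} \<subseteq> E"
    proof -
      have "M1 - R - {{x',x}} \<subseteq> E" using sub1 acx by blast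
      moreover have "M2 \<inter> R \<subseteq> E" using D0E2 EcD0[of b] unfolding R_def by blast
      moreover have "{x',b} \<in> E" using x(2) ab bc by (auto simp: insert_commute)
      ultimately show ?thesis by (simp only: Un_subset_iff insert_subset empty_subsetI simp_thms)
    qed
    thus False using sat_from_vm sw nsat by blast
  qed
  have na': "a \<notin> vcomp D0 b" using caseC[of a c] ac(1) by blast
  have nc': "c \<notin> vcomp D0 b" using caseC[of c a] ac(1) by blast
  \<comment> \<open>Case D: neither component touches a or c\<close>
  define R where "R = Ecomp D0 d \<union> Ecomp D0 b \<union> {{b,d}}"
  have sw: "vm ((M2 - R) \<union> (M1 \<inter> R)) \<and> saturates ((M2 - R) \<union> (M1 \<inter> R)) X"
  proof (rule swap_closed[OF vm2 vm1 M2(2) M1(2)])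
    show "R \<subseteq> (M2 - M1) \<union> (M1 - M2)" using EcD0[of d] EcD0[of b] bdM2 bdM1 unfolding R_def D0_def D_def by blast
    show "e \<in> R" if h: "e \<in> (M2 - M1) \<union> (M1 - M2)" "v \<in> e" "\<exists>e'\<in>R. v \<in> e'" for v e
    proof -
      have vc: "v \<in> vcomp D0 d \<or> v \<in> vcomp D0 b"
      proof -
        obtain e' where e': "e' \<in> R" "v \<in> e'" using h(3) by blast
        show ?thesis
        proof (cases "e' = {b,d}")
          case True then show ?thesis using e'(2) bcomp dcomp by auto
        next
          case False
          hence "e' \<in> Ecomp D0 d \<or> e' \<in> Ecomp D0 b" using e' unfolding R_def by blast
          then show ?thesis using Ecomp_touch e'(2) by metis
        qed
      qed
      show ?thesis
      proof (cases "e = {b,d}")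
        case True then show ?thesis unfolding R_def by simp
      next
        case False
        have "e \<noteq> {a,c}" using h(2) vc na nc na' nc' by auto
        hence eD0: "e \<in> D0" using False h(1) unfolding D0_def D_def by blast
        show ?thesis
        proof (cases "v \<in> vcomp D0 d")
          case True then show ?thesis using comp_edge[OF D0K eD0 h(2)] unfolding R_def by blast
        next
          case False
          hence "v \<in> vcomp D0 b" using vc by simp
          then show ?thesis using comp_edge[OF D0K eD0 h(2)] unfolding R_def by blast
        qed
      qed
    qed
  qed
  have "(M2 - R) \<union> (M1 \<inter> R) \<subseteq> E"
  proof -
    have "M2 - R \<subseteq> E" using sub2 unfolding R_def by blast
    moreover have "M1 \<inter> R \<subseteq> E" using D0E1 EcD0[of d] EcD0[of b] bdM1 unfolding R_def by blast
    ultimately show ?thesis by blast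
  qed
  thus False using sat_from_vm sw nsat by blast
qed

definition clique :: "'a set set \<Rightarrow> 'a set \<Rightarrow> bool" where
  "clique E P = (\<forall>u\<in>P. \<forall>v\<in>P. u \<noteq> v \<longrightarrow> {u,v} \<in> E)"

lemma clique_subset: "clique E P \<Longrightarrow> Q \<subseteq> P \<Longrightarrow> clique E Q"
  unfolding clique_def by blast

lemma clique_match: "finite P \<Longrightarrow> clique E P \<Longrightarrow> even (card P) \<Longrightarrow> \<exists>N. matching E N \<and> \<Union>N = P"
proof (induction "card P" arbitrary: P rule: less_induct)
  case less
  show ?case
  proof (cases "P = {}")
    case True
    then show ?thesis unfolding matching_def by (intro exI[of _ "{}"]) simp
  next
    case False
    then obtain u where u: "u \<in> P" by blast
    have "card P \<noteq> 1" using less.prems(3) by auto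
    moreover have "card P \<noteq> 0" using False less.prems(1) by simp
    ultimately have c2: "card P \<ge> 2" by linarith
    have "card (P - {u}) = card P - 1" using u less.prems(1) by (simp add: card_Diff_singleton)
    hence "card (P - {u}) \<noteq> 0" using c2 by simp
    hence "P - {u} \<noteq> {}" by (metis card.empty)
    then obtain v where v: "v \<in> P" "v \<noteq> u" by blast
    define P' where "P' = P - {u,v}"
    have cP': "card P' = card P - 2" unfolding P'_def using u v less.prems(1) by (simp add: card_Diff_subset)
    have "card P \<ge> 2" using \<open>card P \<noteq> 0\<close> \<open>card P \<noteq> 1\<close> by linarith
    hence lt: "card P' < card P" using cP' by simp
    have ev: "even (card P')" using cP' less.prems(3) \<open>card P \<ge> 2\<close> by simp
    have cl: "clique E P'" by (rule clique_subset[OF less.prems(2)]) (auto simp: P'_def)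
    have finP': "finite P'" using less.prems(1) unfolding P'_def by simp
    from less.hyps[OF lt finP' cl ev] obtain N' where N': "matching E N'" "\<Union>N' = P'"
      by (elim exE conjE)
    have uvE: "{u,v} \<in> E" using less.prems(2)[unfolded clique_def] u v(1) v(2) by metis
    have disj: "{u,v} \<inter> e = {}" if "e \<in> N'" for e
    proof -
      have "e \<subseteq> P'" using that N'(2) by blast
      thus ?thesis unfolding P'_def by blast
    qed
    have disj': "e \<inter> {u,v} = {}" if "e \<in> N'" for e using disj[OF that] by blast
    have "matching E (insert {u,v} N')"
      unfolding matching_def
    proof (intro conjI ballI impI)
      show "insert {u, v} N' \<subseteq> E" using N'(1) uvE unfolding matching_def by blast
    next
      fix e1 e2 assume e12: "e1 \<in> insert {u,v} N'" "e2 \<in> insert {u,v} N'" "e1 \<noteq> e2"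
      have m': "\<forall>e1\<in>N'. \<forall>e2\<in>N'. e1 \<noteq> e2 \<longrightarrow> e1 \<inter> e2 = {}" using N'(1) unfolding matching_def by blast
      show "e1 \<inter> e2 = {}"
      proof (cases "e1 = {u,v}")
        case True
        hence "e2 \<in> N'" using e12 by blast
        thus ?thesis using disj True by simp
      next
        case False
        hence e1N: "e1 \<in> N'" using e12 by blast
        show ?thesis
        proof (cases "e2 = {u,v}")
          case True thus ?thesis using disj' e1N by simp
        next
          case False
          hence "e2 \<in> N'" using e12 by blast
          thus ?thesis using m' e1N e12(3) by blast
        qed
      qed
    qed
    moreover have "\<Union>(insert {u,v} N') = P"
    proof -
      have "\<Union>(insert {u,v} N') = {u,v} \<union> P'" using N'(2) by simp
      also have "\<dots> = P" unfolding P'_def using u v by blast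
      finally show ?thesis .
    qed
    ultimately show ?thesis by (intro exI[of _ "insert {u,v} N'"] conjI)
  qed
qed

lemma clique_match':
  assumes "finite P" "clique E P" "even (card P) \<or> \<not> P \<subseteq> X"
  shows "\<exists>N. matching E N \<and> \<Union>N \<subseteq> P \<and> P \<inter> X \<subseteq> \<Union>N"
proof (cases "even (card P)")
  case True
  from clique_match[OF assms(1,2) True] obtain N where N: "matching E N" "\<Union>N = P"
    by (elim exE conjE)
  show ?thesis by (rule exI[of _ N]) (use N in blast)
next
  case False
  then obtain y where y: "y \<in> P" "y \<notin> X" using assms(3) by blast
  have "card (P - {y}) = card P - 1" using y assms(1) by simp
  moreover have "card P \<ge> 1" using y assms(1) by (metis One_nat_def Suc_leI card_gt_0_iff empty_iff)
  ultimately have "even (card (P - {y}))" using False by simp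
  moreover have "clique E (P - {y})" by (rule clique_subset[OF assms(2)]) blast
  moreover have "finite (P - {y})" using assms(1) by simp
  ultimately have "\<exists>N. matching E N \<and> \<Union>N = P - {y}" using clique_match[of "P - {y}" E] by blast
  then obtain N where N: "matching E N" "\<Union>N = P - {y}" by (elim exE conjE)
  show ?thesis by (rule exI[of _ N]) (use N y in blast)
qed

lemma parts_sat:
  assumes fin: "finite \<P>" "\<forall>P\<in>\<P>. finite P"
    and disj: "\<forall>P1\<in>\<P>. \<forall>P2\<in>\<P>. P1 \<noteq> P2 \<longrightarrow> P1 \<inter> P2 = {}"
    and cl: "\<forall>P\<in>\<P>. clique E P"
    and par: "\<forall>P\<in>\<P>. even (card P) \<or> \<not> P \<subseteq> X"
    and cov: "X \<subseteq> \<Union>\<P>"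
  shows "sat E X"
proof -
  have ex: "\<forall>P\<in>\<P>. \<exists>N. matching E N \<and> \<Union>N \<subseteq> P \<and> P \<inter> X \<subseteq> \<Union>N"
  proof
    fix P assume P: "P \<in> \<P>"
    show "\<exists>N. matching E N \<and> \<Union>N \<subseteq> P \<and> P \<inter> X \<subseteq> \<Union>N"
      by (rule clique_match'[OF fin(2)[rule_format, OF P] cl[rule_format, OF P] par[rule_format, OF P]])
  qed
  from bchoice[OF ex] obtain f where f: "\<forall>P\<in>\<P>. matching E (f P) \<and> \<Union>(f P) \<subseteq> P \<and> P \<inter> X \<subseteq> \<Union>(f P)"
    by (elim exE)
  define M where "M = \<Union>(f ` \<P>)"
  have "matching E M"
    unfolding matching_def
  proof (intro conjI ballI impI)
    show "M \<subseteq> E" using f unfolding M_def matching_def by blast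
  next
    fix e1 e2 assume e: "e1 \<in> M" "e2 \<in> M" "e1 \<noteq> e2"
    then obtain P1 P2 where P: "P1 \<in> \<P>" "P2 \<in> \<P>" "e1 \<in> f P1" "e2 \<in> f P2" unfolding M_def by blast
    show "e1 \<inter> e2 = {}"
    proof (cases "P1 = P2")
      case True
      then show ?thesis using f P e(3) unfolding matching_def by blast
    next
      case False
      have "e1 \<subseteq> P1" "e2 \<subseteq> P2" using f P by blast+
      then show ?thesis using disj P False by blast
    qed
  qed
  moreover have "saturates M X"
    unfolding saturates_def
  proof
    fix v assume "v \<in> X"
    then obtain P where "P \<in> \<P>" "v \<in> P" using cov by blast
    hence "v \<in> \<Union>(f P)" using f \<open>v \<in> X\<close> by blast
    thus "\<exists>e\<in>M. v \<in> e" using \<open>P \<in> \<P>\<close> unfolding M_def by blast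
  qed
  ultimately show ?thesis unfolding sat_def by blast
qed

lemma clique_union_univ:
  assumes "clique E P" "\<And>u v. u \<in> Z \<Longrightarrow> v \<in> P \<union> Z \<Longrightarrow> v \<noteq> u \<Longrightarrow> {u,v} \<in> E"
  shows "clique E (P \<union> Z)"
  unfolding clique_def
proof (intro ballI impI)
  fix u v assume uv: "u \<in> P \<union> Z" "v \<in> P \<union> Z" "u \<noteq> v"
  show "{u,v} \<in> E"
  proof (cases "u \<in> Z")
    case True then show ?thesis using assms(2) uv by blast
  next
    case False
    show ?thesis
    proof (cases "v \<in> Z")
      case True
      hence "{v,u} \<in> E" using assms(2) uv by blast
      then show ?thesis by (simp add: insert_commute)
    next
      case False
      then show ?thesis using \<open>u \<notin> Z\<close> uv assms(1) unfolding clique_def by blast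
    qed
  qed
qed

lemma card_Union_even:
  assumes "finite \<P>" "\<forall>P\<in>\<P>. finite P" "\<forall>P1\<in>\<P>. \<forall>P2\<in>\<P>. P1 \<noteq> P2 \<longrightarrow> P1 \<inter> P2 = {}"
    "\<forall>P\<in>\<P>. even (card P)"
  shows "even (card (\<Union>\<P>))"
proof -
  have "card (\<Union>\<P>) = (\<Sum>P\<in>\<P>. card P)"
    by (rule card_Union_disjoint) (use assms in \<open>auto simp: pairwise_def disjnt_def\<close>)
  moreover have "even (\<Sum>P\<in>\<P>. card P)" using assms(4) by (intro dvd_sum) blast
  ultimately show ?thesis by simp
qed

lemma clique_sat:
  fixes V :: "'a set" and E :: "'a set set" and X :: "'a set"
  assumes finV: "finite V" and EK: "E \<subseteq> K2 V" and XV: "X \<subseteq> V" and C: "condC E X"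
    and U_def: "U = {u\<in>V. \<forall>v\<in>V. v \<noteq> u \<longrightarrow> {u,v} \<in> E}"
    and tr: "\<And>a b c. a \<in> V \<Longrightarrow> b \<in> V \<Longrightarrow> c \<in> V \<Longrightarrow> b \<notin> U \<Longrightarrow> {a,b} \<in> E \<Longrightarrow> {b,c} \<in> E \<Longrightarrow> a \<noteq> c \<Longrightarrow> {a,c} \<in> E"
  shows "sat E X"
proof -
  have Ecard: "card e = 2" if "e \<in> E" for e using that EK unfolding K2_def by auto
  have Esub: "e \<subseteq> V" if "e \<in> E" for e using that EK unfolding K2_def by auto
  have edgeV: "u \<in> V" "v \<in> V" if "{u,v} \<in> E" for u v using Esub[OF that] by auto
  have comm: "{v,u} \<in> E" if "{u,v} \<in> E" for u v using that by (simp add: insert_commute)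
  have Uuniv: "{u,v} \<in> E" if "u \<in> U" "v \<in> V" "v \<noteq> u" for u v using that unfolding U_def by blast
  have UV: "U \<subseteq> V" unfolding U_def by blast
  define W where "W = V - U"
  define cls where "cls w = {v \<in> W. v = w \<or> {v,w} \<in> E}" for w
  have WV: "W \<subseteq> V" unfolding W_def by blast
  have WU: "W \<inter> U = {}" unfolding W_def by blast
  have cls_self: "w \<in> cls w" if "w \<in> W" for w using that unfolding cls_def by simp
  have cls_sub: "cls w \<subseteq> W" for w unfolding cls_def by blast
  have WnU: "w \<notin> U" if "w \<in> W" for w using that unfolding W_def by blast
  have cls_clique: "clique E (cls w)" if w: "w \<in> W" for w
    unfolding clique_def
  proof (intro ballI impI)
    fix v1 v2 assume v: "v1 \<in> cls w" "v2 \<in> cls w" "v1 \<noteq> v2"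
    show "{v1,v2} \<in> E"
    proof (cases "v1 = w")
      case True
      hence "{v2,w} \<in> E" using v unfolding cls_def by auto
      then show ?thesis using True comm by blast
    next
      case f1: False
      hence e1: "{v1,w} \<in> E" using v unfolding cls_def by auto
      show ?thesis
      proof (cases "v2 = w")
        case True then show ?thesis using e1 by simp
      next
        case False
        hence "{v2,w} \<in> E" using v unfolding cls_def by auto
        hence e2: "{w,v2} \<in> E" using comm by blast
        show ?thesis by (rule tr[OF edgeV(1)[OF e1] edgeV(2)[OF e1] edgeV(2)[OF e2] WnU[OF w] e1 e2 v(3)])
      qed
    qed
  qed
  have cls_gen: "z \<in> cls w" if w: "w \<in> W" and v: "v \<in> cls w" and z: "z \<in> cls v" for v w z
  proof -
    have zW: "z \<in> W" using z cls_sub by blast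
    have vW: "v \<in> W" using v cls_sub by blast
    show ?thesis
    proof (cases "z = v")
      case True then show ?thesis using v by simp
    next
      case zv: False
      hence ezv: "{z,v} \<in> E" using z unfolding cls_def by auto
      show ?thesis
      proof (cases "z = w")
        case True then show ?thesis using cls_self[OF w] by simp
      next
        case zw: False
        show ?thesis
        proof (cases "v = w")
          case True then show ?thesis using ezv zW unfolding cls_def by simp
        next
          case False
          hence evw: "{v,w} \<in> E" using v unfolding cls_def by auto
          have "{z,w} \<in> E" by (rule tr[OF edgeV(1)[OF ezv] edgeV(2)[OF ezv] edgeV(2)[OF evw] WnU[OF vW] ezv evw zw])
          then show ?thesis using zW unfolding cls_def by simp
        qed
      qed
    qed
  qed
  have cls_eq: "cls v = cls w" if w: "w \<in> W" and v: "v \<in> cls w" for v w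
  proof -
    have vW: "v \<in> W" using v cls_sub by blast
    have wv: "w \<in> cls v"
    proof (cases "v = w")
      case True then show ?thesis using cls_self[OF w] by simp
    next
      case False
      hence "{v,w} \<in> E" using v unfolding cls_def by auto
      hence "{w,v} \<in> E" using comm by blast
      then show ?thesis using w unfolding cls_def by simp
    qed
    show ?thesis
    proof
      show "cls v \<subseteq> cls w" using cls_gen[OF w v] by blast
      show "cls w \<subseteq> cls v" using cls_gen[OF vW wv] by blast
    qed
  qed
  have cls_edge: "v2 \<in> cls v1" if "v1 \<in> W" "v2 \<in> W" "{v1,v2} \<in> E" for v1 v2
    using that comm unfolding cls_def by blast
  define \<K> where "\<K> = cls ` W"
  have finW: "finite W" using finV WV finite_subset by blast
  have finK: "finite \<K>" unfolding \<K>_def using finW by simp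
  have Ksub: "K \<subseteq> W" if "K \<in> \<K>" for K using that cls_sub unfolding \<K>_def by blast
  have Kfin: "finite K" if "K \<in> \<K>" for K using Ksub[OF that] finW finite_subset by blast
  have Kcl: "clique E K" if "K \<in> \<K>" for K using that cls_clique unfolding \<K>_def by blast
  have Kmem: "cls z = K" if "K \<in> \<K>" "z \<in> K" for K z
    using that cls_eq unfolding \<K>_def by blast
  have Kdisj: "K1 \<inter> K2 = {}" if "K1 \<in> \<K>" "K2 \<in> \<K>" "K1 \<noteq> K2" for K1 K2
  proof (rule ccontr)
    assume "K1 \<inter> K2 \<noteq> {}"
    then obtain z where "z \<in> K1" "z \<in> K2" by blast
    hence "cls z = K1" "cls z = K2" using Kmem that by blast+
    thus False using that(3) by simp
  qed
  have UK: "\<Union>\<K> = W" unfolding \<K>_def using cls_sub cls_self by blast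
  define B where "B = {K \<in> \<K>. K \<subseteq> X \<and> odd (card K)}"
  define S where "S = \<Union>B"
  have BK: "B \<subseteq> \<K>" unfolding B_def by blast
  have SX: "S \<subseteq> X" unfolding S_def B_def by blast
  have SW: "S \<subseteq> W" unfolding S_def using BK Ksub by blast
  have finS: "finite S" using SW finW finite_subset by blast
  obtain N where N: "matching E N" "\<Union>N \<subseteq> S" "card S \<le> 2 * card N + card (bd E S)"
    using C SX unfolding condC_def by blast
  have finU: "finite U" using UV finV finite_subset by blast
  have bdU: "bd E S \<subseteq> U"
  proof
    fix u assume "u \<in> bd E S"
    then obtain v where uv: "v \<in> S" "{u,v} \<in> E" "u \<notin> S" unfolding bd_def by blast
    obtain K where K: "K \<in> B" "v \<in> K" using uv(1) unfolding S_def by blast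
    have uV: "u \<in> V" using edgeV(1)[OF uv(2)] .
    show "u \<in> U"
    proof (rule ccontr)
      assume "u \<notin> U"
      hence uW: "u \<in> W" using uV unfolding W_def by blast
      have vW: "v \<in> W" using uv(1) SW by blast
      have "u \<in> cls v" using cls_edge[OF vW uW comm[OF uv(2)]] .
      moreover have "cls v = K" using Kmem K BK by blast
      ultimately have "u \<in> S" using K unfolding S_def by blast
      thus False using uv(3) by simp
    qed
  qed
  have cbd: "card (bd E S) \<le> card U" using bdU finU by (simp add: card_mono)
  have finE: "finite E" using EK finite_K2[OF finV] finite_subset by blast
  have finN: "finite N" using N(1) finE unfolding matching_def using finite_subset by blast
  have Nm: "\<forall>e1\<in>N. \<forall>e2\<in>N. e1 \<noteq> e2 \<longrightarrow> e1 \<inter> e2 = {}" using N(1) unfolding matching_def by blast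
  have Nc: "\<forall>e\<in>N. card e = 2" using N(1) Ecard unfolding matching_def by blast
  have cUN: "card (\<Union>N) = 2 * card N" by (rule matching_card_Union[OF finN Nc Nm])
  have unc: "\<exists>z\<in>K. z \<notin> \<Union>N" if KB: "K \<in> B" for K
  proof (rule ccontr)
    assume "\<not> (\<exists>z\<in>K. z \<notin> \<Union>N)"
    hence Kin: "K \<subseteq> \<Union>N" by blast
    define NK where "NK = {e \<in> N. e \<subseteq> K}"
    have KK: "K \<in> \<K>" using KB BK by blast
    have "\<Union>NK = K"
    proof
      show "\<Union>NK \<subseteq> K" unfolding NK_def by blast
      show "K \<subseteq> \<Union>NK"
      proof
        fix z assume zK: "z \<in> K"
        then obtain e where e: "e \<in> N" "z \<in> e" using Kin by blast
        have eE: "e \<in> E" using e(1) N(1) unfolding matching_def by blast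
        obtain z' where z': "z' \<noteq> z" "e = {z,z'}" using card2_other[OF Ecard[OF eE] e(2)] by blast
        have "e \<subseteq> W" using e(1) N(2) SW by blast
        hence zW: "z \<in> W" "z' \<in> W" using z' by auto
        have "z' \<in> cls z" using cls_edge[OF zW] eE z'(2) by blast
        moreover have "cls z = K" using Kmem[OF KK zK] .
        ultimately have "e \<subseteq> K" using z' zK by auto
        thus "z \<in> \<Union>NK" using e unfolding NK_def by blast
      qed
    qed
    moreover have "card (\<Union>NK) = 2 * card NK"
      by (rule matching_card_Union) (use finN Nc Nm in \<open>auto simp: NK_def\<close>)
    ultimately have "even (card K)" by simp
    thus False using KB unfolding B_def by simp
  qed
  have unc': "\<forall>K\<in>B. \<exists>z. z \<in> K \<and> z \<notin> \<Union>N" using unc by blast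
  obtain g where g: "\<forall>K\<in>B. g K \<in> K \<and> g K \<notin> \<Union>N"
    using bchoice[OF unc'] by (elim exE)
  have ginj: "inj_on g B"
  proof (rule inj_onI)
    fix K1 K2 assume K: "K1 \<in> B" "K2 \<in> B" "g K1 = g K2"
    have "g K1 \<in> K1 \<inter> K2" using g K by auto
    thus "K1 = K2" using Kdisj K BK by blast
  qed
  have gS: "g ` B \<subseteq> S - \<Union>N" using g unfolding S_def by blast
  have "card B = card (g ` B)" using ginj by (simp add: card_image)
  also have "\<dots> \<le> card (S - \<Union>N)" using gS finS by (simp add: card_mono)
  also have "\<dots> = card S - card (\<Union>N)" using N(2) finS by (meson card_Diff_subset finite_subset)
  finally have "card B \<le> card S - 2 * card N" using cUN by simp
  hence cB: "card B \<le> card U" using N(3) cbd by linarith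
  have finB: "finite B" using BK finK finite_subset by blast
  obtain r where r: "r ` B \<subseteq> U" "inj_on r B" using card_le_inj[OF finB finU cB] by blast
  define P0 where "P0 = (\<lambda>K. insert (r K) K) ` B \<union> (\<K> - B)"
  define Z where "Z = U - r ` B"
  have rU: "r K \<in> U" if "K \<in> B" for K using r(1) that by blast
  have rK: "r K \<notin> K'" if "K \<in> B" "K' \<in> \<K>" for K K' using rU[OF that(1)] Ksub[OF that(2)] WU by blast
  have P0cases: "(\<exists>K\<in>B. P = insert (r K) K) \<or> P \<in> \<K> - B" if "P \<in> P0" for P
    using that unfolding P0_def by blast
  have finP0: "finite P0" unfolding P0_def using finB finK by simp
  have P0fin: "finite P" if "P \<in> P0" for P using P0cases[OF that] Kfin BK by blast
  have P0V: "P \<subseteq> V" if "P \<in> P0" for P using P0cases[OF that] Ksub BK rU WV UV by blast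
  have Ucl: "{u,v} \<in> E" if "u \<in> U" "v \<in> V" "v \<noteq> u" for u v using Uuniv that by blast
  have P0cl: "clique E P" if "P \<in> P0" for P
  proof -
    from P0cases[OF that] show ?thesis
    proof
      assume "\<exists>K\<in>B. P = insert (r K) K"
      then obtain K where K: "K \<in> B" "P = insert (r K) K" by blast
      have KK: "K \<in> \<K>" using K BK by blast
      have "clique E (K \<union> {r K})"
        by (rule clique_union_univ[OF Kcl[OF KK]]) (use rU[OF K(1)] Ksub[OF KK] WV UV Ucl in blast)
      thus ?thesis using K by simp
    next
      assume "P \<in> \<K> - B" thus ?thesis using Kcl by blast
    qed
  qed
  have P0par: "even (card P) \<or> \<not> P \<subseteq> X" if "P \<in> P0" for P
  proof -
    from P0cases[OF that] show ?thesis
    proof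
      assume "\<exists>K\<in>B. P = insert (r K) K"
      then obtain K where K: "K \<in> B" "P = insert (r K) K" by blast
      have KK: "K \<in> \<K>" using K BK by blast
      have "card P = Suc (card K)" using K rK[OF K(1) KK] Kfin[OF KK] by simp
      moreover have "odd (card K)" using K unfolding B_def by simp
      ultimately show ?thesis by simp
    next
      assume "P \<in> \<K> - B" thus ?thesis unfolding B_def by auto
    qed
  qed
  have P0disj: "P1 \<inter> P2 = {}" if "P1 \<in> P0" "P2 \<in> P0" "P1 \<noteq> P2" for P1 P2
  proof -
    from P0cases[OF that(1)] P0cases[OF that(2)] show ?thesis
    proof (elim disjE)
      assume "\<exists>K\<in>B. P1 = insert (r K) K" "\<exists>K\<in>B. P2 = insert (r K) K"
      then obtain K1 K2 where K: "K1 \<in> B" "P1 = insert (r K1) K1" "K2 \<in> B" "P2 = insert (r K2) K2" by blast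
      have "K1 \<noteq> K2" using K that(3) by blast
      hence "K1 \<inter> K2 = {}" "r K1 \<noteq> r K2" using Kdisj K BK r(2) unfolding inj_on_def by blast+
      thus ?thesis using K rK BK by blast
    next
      assume "\<exists>K\<in>B. P1 = insert (r K) K" "P2 \<in> \<K> - B"
      then obtain K1 where K: "K1 \<in> B" "P1 = insert (r K1) K1" by blast
      have "K1 \<noteq> P2" using K \<open>P2 \<in> \<K> - B\<close> by blast
      hence "K1 \<inter> P2 = {}" using Kdisj K BK \<open>P2 \<in> \<K> - B\<close> by blast
      thus ?thesis using K rK \<open>P2 \<in> \<K> - B\<close> by blast
    next
      assume "P1 \<in> \<K> - B" "\<exists>K\<in>B. P2 = insert (r K) K"
      then obtain K2 where K: "K2 \<in> B" "P2 = insert (r K2) K2" by blast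
      have "K2 \<noteq> P1" using K \<open>P1 \<in> \<K> - B\<close> by blast
      hence "K2 \<inter> P1 = {}" using Kdisj K BK \<open>P1 \<in> \<K> - B\<close> by blast
      thus ?thesis using K rK \<open>P1 \<in> \<K> - B\<close> by blast
    next
      assume "P1 \<in> \<K> - B" "P2 \<in> \<K> - B"
      thus ?thesis using Kdisj that(3) by blast
    qed
  qed
  have ZU: "Z \<subseteq> U" unfolding Z_def by blast
  have finZ: "finite Z" using ZU finU finite_subset by blast
  have Zdisj: "P \<inter> Z = {}" if "P \<in> P0" for P
    using P0cases[OF that] Ksub BK WU unfolding Z_def by blast
  have cover: "\<Union>P0 \<union> Z = V"
  proof
    show "\<Union>P0 \<union> Z \<subseteq> V" using P0V ZU UV by blast
    show "V \<subseteq> \<Union>P0 \<union> Z"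
    proof
      fix v assume vV: "v \<in> V"
      show "v \<in> \<Union>P0 \<union> Z"
      proof (cases "v \<in> U")
        case True
        then show ?thesis unfolding Z_def P0_def by blast
      next
        case False
        hence "v \<in> W" using vV unfolding W_def by blast
        hence "v \<in> \<Union>\<K>" using UK by blast
        then obtain K where "K \<in> \<K>" "v \<in> K" by blast
        then show ?thesis unfolding P0_def by (cases "K \<in> B") blast+
      qed
    qed
  qed
  have Zcl: "clique E Z" unfolding clique_def using ZU UV Ucl by blast
  show ?thesis
  proof (cases "even (card Z) \<or> \<not> Z \<subseteq> X")
    case True
    show ?thesis
    proof (rule parts_sat[of "insert Z P0"])
      show "finite (insert Z P0)" using finP0 by simp
      show "\<forall>P\<in>insert Z P0. finite P" using finZ P0fin by blast
      show "\<forall>P1\<in>insert Z P0. \<forall>P2\<in>insert Z P0. P1 \<noteq> P2 \<longrightarrow> P1 \<inter> P2 = {}"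
        using P0disj Zdisj by blast
      show "\<forall>P\<in>insert Z P0. clique E P" using Zcl P0cl by blast
      show "\<forall>P\<in>insert Z P0. even (card P) \<or> \<not> P \<subseteq> X" using True P0par by blast
      show "X \<subseteq> \<Union>(insert Z P0)" using cover XV by blast
    qed
  next
    case False
    hence Zodd: "odd (card Z)" "Z \<subseteq> X" by auto
    show ?thesis
    proof (cases "\<exists>P\<in>P0. \<not> P \<subseteq> X")
      case True
      then obtain Q where Q: "Q \<in> P0" "\<not> Q \<subseteq> X" by blast
      show ?thesis
      proof (rule parts_sat[of "insert (Q \<union> Z) (P0 - {Q})"])
        show "finite (insert (Q \<union> Z) (P0 - {Q}))" using finP0 by simp
        show "\<forall>P\<in>insert (Q \<union> Z) (P0 - {Q}). finite P" using finZ P0fin Q(1) by blast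
        show "\<forall>P1\<in>insert (Q \<union> Z) (P0 - {Q}). \<forall>P2\<in>insert (Q \<union> Z) (P0 - {Q}). P1 \<noteq> P2 \<longrightarrow> P1 \<inter> P2 = {}"
          using P0disj Zdisj Q(1) by blast
        have "clique E (Q \<union> Z)"
          by (rule clique_union_univ[OF P0cl[OF Q(1)]]) (use ZU P0V[OF Q(1)] finZ UV Ucl in blast)
        thus "\<forall>P\<in>insert (Q \<union> Z) (P0 - {Q}). clique E P" using P0cl by blast
        show "\<forall>P\<in>insert (Q \<union> Z) (P0 - {Q}). even (card P) \<or> \<not> P \<subseteq> X" using Q(2) P0par by blast
        show "X \<subseteq> \<Union>(insert (Q \<union> Z) (P0 - {Q}))" using cover XV Q(1) by blast
      qed
    next
      case False
      hence P0X: "\<forall>P\<in>P0. P \<subseteq> X" by blast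
      have VX: "V = X" using cover P0X Zodd(2) XV by blast
      have ev: "even (card (\<Union>P0))"
      proof (rule card_Union_even[OF finP0])
        show "\<forall>P\<in>P0. finite P" using P0fin by blast
        show "\<forall>P1\<in>P0. \<forall>P2\<in>P0. P1 \<noteq> P2 \<longrightarrow> P1 \<inter> P2 = {}" using P0disj by blast
        show "\<forall>P\<in>P0. even (card P)"
        proof
          fix P assume P: "P \<in> P0"
          show "even (card P)" using P0par[OF P] P0X P by blast
        qed
      qed
      have i0: "\<Union>P0 \<inter> Z = {}" using Zdisj by blast
      have f0: "finite (\<Union>P0)" using finP0 P0fin by blast
      have "card V = card (\<Union>P0 \<union> Z)" using cover by simp
      also have "\<dots> = card (\<Union>P0) + card Z" using card_Un_disjoint[OF f0 finZ i0] .
      finally have "card V = card (\<Union>P0) + card Z" .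
      hence oddV: "odd (card V)" using ev Zodd(1) by simp
      obtain N' where N': "matching E N'" "\<Union>N' \<subseteq> X" "card X \<le> 2 * card N' + card (bd E X)"
        using C unfolding condC_def by blast
      have "bd E X = {}" unfolding bd_def using edgeV VX by blast
      hence c1: "card X \<le> 2 * card N'" using N'(3) by simp
      have finN': "finite N'" using N'(1) finE unfolding matching_def using finite_subset by blast
      have "card (\<Union>N') = 2 * card N'"
        by (rule matching_card_Union[OF finN']) (use N'(1) Ecard in \<open>auto simp: matching_def\<close>)
      moreover have "card (\<Union>N') \<le> card X" using N'(2) finV XV finite_subset card_mono by metis
      ultimately have "card X = 2 * card N'" using c1 by simp
      thus ?thesis using oddV VX by simp
    qed
  qed
qed

lemma tutte_X:
  fixes V :: "'a set" and E :: "'a set set" and X :: "'a set"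
  assumes finV: "finite V" and EK: "E \<subseteq> K2 V" and XV: "X \<subseteq> V" and C: "condC E X"
  shows "sat E X"
proof (rule ccontr)
  assume ns: "\<not> sat E X"
  define FF where "FF = {E'. E \<subseteq> E' \<and> E' \<subseteq> K2 V \<and> \<not> sat E' X}"
  have finFF: "finite FF" unfolding FF_def
    by (rule finite_subset[of _ "Pow (K2 V)"]) (use finite_K2[OF finV] in auto)
  have EFF: "E \<in> FF" unfolding FF_def using EK ns by blast
  have "Max (card ` FF) \<in> card ` FF" using finFF EFF by (intro Max_in) auto
  then obtain Em where Em: "Em \<in> FF" "card Em = Max (card ` FF)" by (metis imageE)
  have maxc: "card E' \<le> card Em" if "E' \<in> FF" for E' using Em(2) finFF that by simp
  have EEm: "E \<subseteq> Em" and EmK: "Em \<subseteq> K2 V" and nsm: "\<not> sat Em X" using Em(1) unfolding FF_def by auto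
  have finEm: "finite Em" using EmK finite_K2[OF finV] finite_subset by blast
  have ext: "sat (insert e Em) X" if "e \<in> K2 V" "e \<notin> Em" for e
  proof (rule ccontr)
    assume "\<not> sat (insert e Em) X"
    hence "insert e Em \<in> FF" unfolding FF_def using EEm EmK that by blast
    hence "card (insert e Em) \<le> card Em" by (rule maxc)
    thus False using that(2) finEm by simp
  qed
  have CEm: "condC Em X" by (rule condC_mono[OF C EEm finV EmK])
  define U where "U = {u\<in>V. \<forall>v\<in>V. v \<noteq> u \<longrightarrow> {u,v} \<in> Em}"
  have "sat Em X"
  proof (rule clique_sat[OF finV EmK XV CEm U_def])
    fix a b c assume h: "a \<in> V" "b \<in> V" "c \<in> V" "b \<notin> U" "{a,b} \<in> Em" "{b,c} \<in> Em" "a \<noteq> c"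
    show "{a,c} \<in> Em"
    proof (rule ccontr)
      assume nac: "{a,c} \<notin> Em"
      obtain d where d: "d \<in> V" "d \<noteq> b" "{b,d} \<notin> Em" using h(2,4) unfolding U_def by blast
      show False by (rule lovasz_T[OF finV EmK nsm ext h(1,2,3) d(1) h(5,6,7) nac d(2,3)])
    qed
  qed
  thus False using nsm by simp
qed

lemma sg_finE: assumes "simple_graph V E" shows "finite E"
proof -
  have "E \<subseteq> Pow V" "finite V" using assms unfolding simple_graph_def by auto
  thus ?thesis using finite_subset by blast
qed

lemma sg_K2: assumes "simple_graph V E" shows "E \<subseteq> K2 V"
  using assms unfolding simple_graph_def K2_def by blast

lemma degree_le_max: assumes "finite V" "v \<in> V" shows "degree E v \<le> max_degree V E"
  unfolding max_degree_def by (rule Max_ge) (use assms in auto)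

lemma max_degree_le: assumes "finite V" "\<And>v. v \<in> V \<Longrightarrow> degree E v \<le> k" shows "max_degree V E \<le> k"
proof -
  have "finite (insert 0 (degree E ` V))" using assms(1) by simp
  moreover have "\<forall>a\<in>insert 0 (degree E ` V). a \<le> k" using assms(2) by auto
  ultimately show ?thesis unfolding max_degree_def by (simp add: Max_le_iff)
qed

lemma max_degree_empty: "finite V \<Longrightarrow> max_degree V {} = 0"
proof -
  assume "finite V"
  have "degree {} v = 0" for v unfolding degree_def by simp
  thus ?thesis using max_degree_le[OF \<open>finite V\<close>] by (metis le_zero_eq)
qed

lemma degree_mono': "finite F \<Longrightarrow> F' \<subseteq> F \<Longrightarrow> degree F' w \<le> degree F w"
  unfolding degree_def by (rule card_mono) auto

lemma degree_diff_less:
  assumes "finite F" "S \<subseteq> F"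
  shows "degree (F - S) v < degree F v \<longleftrightarrow> (\<exists>e\<in>S. v \<in> e)"
proof
  assume "degree (F - S) v < degree F v"
  show "\<exists>e\<in>S. v \<in> e"
  proof (rule ccontr)
    assume "\<not> (\<exists>e\<in>S. v \<in> e)"
    hence "{e\<in>F - S. v\<in>e} = {e\<in>F. v\<in>e}" by auto
    thus False using \<open>degree (F - S) v < degree F v\<close> unfolding degree_def by simp
  qed
next
  assume "\<exists>e\<in>S. v \<in> e"
  then obtain e where e: "e \<in> S" "v \<in> e" by blast
  have "{e\<in>F - S. v\<in>e} \<subset> {e\<in>F. v\<in>e}" using e assms(2) by blast
  thus "degree (F - S) v < degree F v" unfolding degree_def using assms(1) by (simp add: psubset_card_mono)
qed

lemma degree_pos: "finite F \<Longrightarrow> e \<in> F \<Longrightarrow> v \<in> e \<Longrightarrow> degree F v \<ge> 1"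
proof -
  assume a: "finite F" "e \<in> F" "v \<in> e"
  have "{x\<in>F. v\<in>x} \<noteq> {}" using a by blast
  moreover have "finite {x\<in>F. v\<in>x}" using a(1) by simp
  ultimately show ?thesis unfolding degree_def by (simp add: Suc_leI card_gt_0_iff)
qed

lemma Delta_pos:
  assumes "simple_graph V E" "E \<noteq> {}"
  shows "max_degree V E \<ge> 1"
proof -
  obtain e where e: "e \<in> E" using assms(2) by blast
  have "card e = 2" "e \<subseteq> V" using assms(1) e unfolding simple_graph_def by auto
  hence "e \<noteq> {}" by auto
  then obtain v where v: "v \<in> e" by blast
  have "degree E v \<ge> 1" by (rule degree_pos[OF sg_finE[OF assms(1)] e v])
  moreover have "degree E v \<le> max_degree V E"
  proof (rule degree_le_max)
    show "finite V" using assms(1) unfolding simple_graph_def by simp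
    show "v \<in> V" using v \<open>e \<subseteq> V\<close> by blast
  qed
  ultimately show ?thesis by simp
qed

lemma mitigating_iff:
  assumes sg: "simple_graph V E" and ne: "E \<noteq> {}" and SE: "S \<subseteq> E"
  shows "mitigating_set V E S \<longleftrightarrow> (\<forall>v\<in>core V E. \<exists>e\<in>S. v \<in> e)"
proof
  have finV: "finite V" using sg unfolding simple_graph_def by simp
  have finE: "finite E" using sg_finE[OF sg] .
  have D1: "max_degree V E \<ge> 1" using Delta_pos[OF sg ne] .
  {
    assume m: "mitigating_set V E S"
    show "\<forall>v\<in>core V E. \<exists>e\<in>S. v \<in> e"
    proof
      fix v assume v: "v \<in> core V E"
      hence vV: "v \<in> V" and dv: "degree E v = max_degree V E" unfolding core_def by auto
      have "degree (E - S) v \<le> max_degree V (E - S)" by (rule degree_le_max[OF finV vV])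
      also have "\<dots> \<le> max_degree V E - 1" using m unfolding mitigating_set_def by simp
      finally have "degree (E - S) v < degree E v" using dv D1 by simp
      thus "\<exists>e\<in>S. v \<in> e" using degree_diff_less[OF finE SE] by blast
    qed
  }
  {
    assume c: "\<forall>v\<in>core V E. \<exists>e\<in>S. v \<in> e"
    have "max_degree V (E - S) \<le> max_degree V E - 1"
    proof (rule max_degree_le[OF finV])
      fix v assume vV: "v \<in> V"
      have le: "degree E v \<le> max_degree V E" by (rule degree_le_max[OF finV vV])
      show "degree (E - S) v \<le> max_degree V E - 1"
      proof (cases "v \<in> core V E")
        case True
        hence "degree (E - S) v < degree E v" using c degree_diff_less[OF finE SE] by blast
        thus ?thesis using le by simp
      next
        case False
        hence "degree E v < max_degree V E" using le vV unfolding core_def by simp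
        moreover have "degree (E - S) v \<le> degree E v" by (rule degree_mono'[OF finE]) blast
        ultimately show ?thesis by simp
      qed
    qed
    thus "mitigating_set V E S" unfolding mitigating_set_def using SE by simp
  }
qed

lemma cover_matching:
  assumes "finite R" "R \<subseteq> E" "\<forall>e\<in>R. card e = 2"
  shows "finite S \<Longrightarrow> (\<forall>v\<in>S. \<exists>e\<in>R. v \<in> e) \<Longrightarrow> \<exists>N. matching E N \<and> \<Union>N \<subseteq> S \<and> card S \<le> card R + card N"
  using assms
proof (induction R arbitrary: S rule: finite_induct)
  case empty
  hence "S = {}" by blast
  then show ?case unfolding matching_def by (intro exI[of _ "{}"]) simp
next
  case (insert e R)
  define S' where "S' = S - e"
  have finS': "finite S'" using insert.prems(1) unfolding S'_def by simp
  have covS': "\<forall>v\<in>S'. \<exists>e\<in>R. v \<in> e" using insert.prems(2) unfolding S'_def by blast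
  have RE: "R \<subseteq> E" using insert.prems(3) by blast
  have Rc: "\<forall>e\<in>R. card e = 2" using insert.prems(4) by blast
  obtain N' where N': "matching E N'" "\<Union>N' \<subseteq> S'" "card S' \<le> card R + card N'"
    using insert.IH[OF finS' covS' RE Rc] by blast
  have ce: "card e = 2" using insert.prems(4) by blast
  have fine: "finite e" using ce by (intro card_ge_0_finite) simp
  have cins: "card (insert e R) = Suc (card R)" using insert.hyps by simp
  have cS: "card S = card S' + card (S \<inter> e)"
  proof -
    have "S = S' \<union> (S \<inter> e)" unfolding S'_def by blast
    moreover have "S' \<inter> (S \<inter> e) = {}" unfolding S'_def by blast
    moreover have "finite (S \<inter> e)" using insert.prems(1) by simp
    ultimately show ?thesis using card_Un_disjoint[OF finS'] by metis
  qed
  show ?case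
  proof (cases "e \<subseteq> S")
    case True
    have eE: "e \<in> E" using insert.prems(3) by blast
    have disj: "e \<inter> f = {}" if "f \<in> N'" for f using that N'(2) unfolding S'_def by blast
    have eN': "e \<notin> N'" using disj ce by (metis Int_absorb card.empty zero_neq_numeral)
    have m: "matching E (insert e N')"
      unfolding matching_def
    proof (intro conjI ballI impI)
      show "insert e N' \<subseteq> E" using N'(1) eE unfolding matching_def by blast
    next
      fix e1 e2 assume e12: "e1 \<in> insert e N'" "e2 \<in> insert e N'" "e1 \<noteq> e2"
      have m': "\<forall>e1\<in>N'. \<forall>e2\<in>N'. e1 \<noteq> e2 \<longrightarrow> e1 \<inter> e2 = {}" using N'(1) unfolding matching_def by blast
      show "e1 \<inter> e2 = {}"
      proof (cases "e1 = e")
        case True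
        hence "e2 \<in> N'" using e12 by blast
        thus ?thesis using disj True by simp
      next
        case False
        hence e1N: "e1 \<in> N'" using e12 by blast
        show ?thesis
        proof (cases "e2 = e")
          case True thus ?thesis using disj[OF e1N] by blast
        next
          case False
          hence "e2 \<in> N'" using e12 by blast
          thus ?thesis using m' e1N e12(3) by blast
        qed
      qed
    qed
    have "N' \<subseteq> Pow S'" using N'(2) by blast
    hence finN': "finite N'" using finS' finite_subset by blast
    have "card (S \<inter> e) = 2" using True ce by (simp add: Int_absorb1)
    hence "card S \<le> card (insert e R) + card (insert e N')"
      using cS N'(3) cins eN' finN' by simp
    moreover have "\<Union>(insert e N') \<subseteq> S" using True N'(2) unfolding S'_def by blast
    ultimately show ?thesis using m by blast
  next
    case False
    have "card (S \<inter> e) \<le> 1"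
    proof (rule ccontr)
      assume "\<not> card (S \<inter> e) \<le> 1"
      hence "card (S \<inter> e) \<ge> 2" by simp
      moreover have "card (S \<inter> e) \<le> card e" using fine by (simp add: card_mono)
      ultimately have "card (S \<inter> e) = card e" using ce by simp
      hence "S \<inter> e = e" using fine by (metis Int_lower2 card_subset_eq)
      thus False using False by blast
    qed
    hence "card S \<le> card (insert e R) + card N'" using cS N'(3) cins by simp
    moreover have "\<Union>N' \<subseteq> S" using N'(2) unfolding S'_def by blast
    ultimately show ?thesis using N'(1) by blast
  qed
qed

lemma one_to_two:
  assumes sg: "simple_graph V E" and ne: "E \<noteq> {}" and M: "matching E M" "saturates M (core V E)"
  shows "\<exists>S. min_mitigating_set V E S \<and> matching E S"
proof -
  have finE: "finite E" by (rule sg_finE[OF sg])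
  define MS where "MS = {S. mitigating_set V E S}"
  have finMS: "finite MS" unfolding MS_def mitigating_set_def
    by (rule finite_subset[of _ "Pow E"]) (use finE in auto)
  have EMS: "E \<in> MS" unfolding MS_def using mitigating_iff[OF sg ne, of E] unfolding core_def
  proof -
    have "\<forall>v\<in>core V E. \<exists>e\<in>E. v \<in> e"
    proof
      fix v assume v: "v \<in> core V E"
      hence "degree E v = max_degree V E" unfolding core_def by simp
      hence "degree E v \<ge> 1" using Delta_pos[OF sg ne] by simp
      hence "{e\<in>E. v\<in>e} \<noteq> {}" unfolding degree_def by (metis card.empty not_one_le_zero)
      thus "\<exists>e\<in>E. v \<in> e" by blast
    qed
    thus "E \<in> {S. mitigating_set V E S}" using mitigating_iff[OF sg ne, of E] by simp
  qed
  define m where "m = Min (card ` MS)"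
  have mle: "m \<le> card T" if "T \<in> MS" for T unfolding m_def using finMS that by simp
  define MM where "MM = {S \<in> MS. card S = m}"
  have "m \<in> card ` MS" unfolding m_def using finMS EMS by (intro Min_in) auto
  hence MMne: "MM \<noteq> {}" unfolding MM_def by force
  have finMM: "finite MM" using finMS unfolding MM_def by simp
  define f where "f S = card (S \<inter> M)" for S
  have "Max (f ` MM) \<in> f ` MM" using finMM MMne by (intro Max_in) auto
  then obtain S where S: "S \<in> MM" "f S = Max (f ` MM)" by (metis imageE)
  have fmax: "f T \<le> f S" if "T \<in> MM" for T using S(2) finMM that by simp
  have Smit: "mitigating_set V E S" and cS: "card S = m" using S(1) unfolding MM_def MS_def by auto
  have SE: "S \<subseteq> E" using Smit unfolding mitigating_set_def by simp
  have finS: "finite S" using SE finE finite_subset by blast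
  have Scov: "\<forall>v\<in>core V E. \<exists>e\<in>S. v \<in> e" using mitigating_iff[OF sg ne SE] Smit by simp
  have minS: "min_mitigating_set V E S"
    unfolding min_mitigating_set_def using Smit cS mle unfolding MS_def by simp
  have ME: "M \<subseteq> E" and Mm: "\<forall>e1\<in>M. \<forall>e2\<in>M. e1 \<noteq> e2 \<longrightarrow> e1 \<inter> e2 = {}" using M(1) unfolding matching_def by auto
  have key: False if f12: "f1 \<in> S" "f2 \<in> S" "f1 \<noteq> f2" "f1 \<inter> f2 \<noteq> {}" "f1 \<notin> M" for f1 f2
  proof -
    obtain c where c: "c \<in> f1" "c \<in> f2" using f12(4) by blast
    have cf1: "card f1 = 2" using sg SE f12(1) unfolding simple_graph_def by blast
    obtain u where u: "u \<noteq> c" "f1 = {c,u}" using card2_other[OF cf1 c(1)] by blast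
    have "\<not> mitigating_set V E (S - {f1})"
    proof
      assume "mitigating_set V E (S - {f1})"
      hence "S - {f1} \<in> MS" unfolding MS_def by simp
      hence "m \<le> card (S - {f1})" by (rule mle)
      moreover have "card (S - {f1}) < card S" by (rule card_Diff1_less[OF finS f12(1)])
      ultimately show False using cS by simp
    qed
    then obtain z where z: "z \<in> core V E" "\<not> (\<exists>e\<in>S - {f1}. z \<in> e)"
      using mitigating_iff[OF sg ne, of "S - {f1}"] SE by blast
    obtain ez where ez: "ez \<in> S" "z \<in> ez" using Scov z(1) by blast
    have "ez = f1" using ez z(2) by blast
    hence zcu: "z = c \<or> z = u" using ez(2) u(2) by simp
    have "z \<noteq> c" using z(2) f12(2,3) c(2) by blast
    hence zu: "z = u" using zcu by simp
    have uonly: "e = f1" if "e \<in> S" "u \<in> e" for e using z(2) zu that by blast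
    obtain g where g: "g \<in> M" "u \<in> g" using M(2) z(1) zu unfolding saturates_def by blast
    have gf1: "g \<noteq> f1" using g f12(5) by blast
    have gS: "g \<notin> S" using uonly g gf1 by blast
    define S' where "S' = insert g (S - {f1})"
    have S'E: "S' \<subseteq> E" using SE g ME unfolding S'_def by blast
    have S'cov: "\<forall>v\<in>core V E. \<exists>e\<in>S'. v \<in> e"
    proof
      fix v assume v: "v \<in> core V E"
      obtain e where e: "e \<in> S" "v \<in> e" using Scov v by blast
      show "\<exists>e\<in>S'. v \<in> e"
      proof (cases "e = f1")
        case False then show ?thesis using e unfolding S'_def by blast
      next
        case True
        hence "v = c \<or> v = u" using e(2) u(2) by simp
        then show ?thesis
        proof
          assume "v = c" thus ?thesis using c(2) f12(2,3) unfolding S'_def by blast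
        next
          assume "v = u" thus ?thesis using g(2) unfolding S'_def by blast
        qed
      qed
    qed
    have S'mit: "mitigating_set V E S'" using mitigating_iff[OF sg ne S'E] S'cov by simp
    have cS': "card S' = m"
    proof -
      have "card (S - {f1}) = card S - 1" using f12(1) finS by simp
      moreover have "g \<notin> S - {f1}" using gS by blast
      ultimately have "card S' = Suc (card S - 1)" unfolding S'_def using finS by simp
      moreover have "card S \<ge> 1" using f12(1) finS by (metis One_nat_def Suc_leI card_gt_0_iff empty_iff)
      ultimately show ?thesis using cS by simp
    qed
    have "S' \<in> MM" unfolding MM_def MS_def using S'mit cS' by simp
    hence le: "f S' \<le> f S" by (rule fmax)
    have "S' \<inter> M = insert g (S \<inter> M)" unfolding S'_def using g(1) f12(5) by blast
    moreover have "g \<notin> S \<inter> M" using gS by blast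
    moreover have "finite (S \<inter> M)" using finS by simp
    ultimately have "f S' = Suc (f S)" unfolding f_def by simp
    thus False using le by simp
  qed
  have "matching E S"
    unfolding matching_def
  proof (intro conjI ballI impI)
    show "S \<subseteq> E" by (rule SE)
  next
    fix e1 e2 assume e: "e1 \<in> S" "e2 \<in> S" "e1 \<noteq> e2"
    show "e1 \<inter> e2 = {}"
    proof (rule ccontr)
      assume ni: "e1 \<inter> e2 \<noteq> {}"
      show False
      proof (cases "e1 \<in> M")
        case False then show False using key[OF e ni] by simp
      next
        case True
        show False
        proof (cases "e2 \<in> M")
          case True then show False using Mm \<open>e1 \<in> M\<close> e(3) ni by blast
        next
          case False
          have "e2 \<inter> e1 \<noteq> {}" using ni by blast
          then show False using key[OF e(2) e(1) e(3)[symmetric] _ False] by simp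
        qed
      qed
    qed
  qed
  thus ?thesis using minS by blast
qed

lemma nb_basic:
  assumes sg: "simple_graph V E" and SC: "S \<subseteq> core V E"
  shows "closed_nbhd E S \<subseteq> V" "finite (closed_nbhd E S)" "induced_edges E (closed_nbhd E S) \<subseteq> E"
    "finite (induced_edges E (closed_nbhd E S))" "S \<subseteq> closed_nbhd E S"
proof -
  have finV: "finite V" using sg unfolding simple_graph_def by simp
  have SV: "S \<subseteq> V" using SC unfolding core_def by blast
  show NV: "closed_nbhd E S \<subseteq> V"
  proof
    fix u assume "u \<in> closed_nbhd E S"
    then consider "u \<in> S" | v where "v \<in> S" "{u,v} \<in> E" unfolding closed_nbhd_def by blast
    then show "u \<in> V"
    proof cases
      case 1 then show ?thesis using SV by blast
    next
      case 2 then show ?thesis using sg unfolding simple_graph_def by blast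
    qed
  qed
  show "finite (closed_nbhd E S)" using NV finV finite_subset by blast
  show "induced_edges E (closed_nbhd E S) \<subseteq> E" unfolding induced_edges_def by blast
  show "finite (induced_edges E (closed_nbhd E S))" using sg_finE[OF sg] unfolding induced_edges_def by simp
  show "S \<subseteq> closed_nbhd E S" unfolding closed_nbhd_def by blast
qed

lemma nb_edges:
  assumes sg: "simple_graph V E" and s: "s \<in> S"
  shows "{e \<in> induced_edges E (closed_nbhd E S). s \<in> e} = {e\<in>E. s \<in> e}"
proof
  show "{e \<in> induced_edges E (closed_nbhd E S). s \<in> e} \<subseteq> {e\<in>E. s \<in> e}" unfolding induced_edges_def by blast
  show "{e\<in>E. s \<in> e} \<subseteq> {e \<in> induced_edges E (closed_nbhd E S). s \<in> e}"
  proof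
    fix e assume e: "e \<in> {e\<in>E. s \<in> e}"
    have ce: "card e = 2" using sg e unfolding simple_graph_def by blast
    have se: "s \<in> e" using e by simp
    obtain u where u: "u \<noteq> s" "e = {s,u}" using card2_other[OF ce se] by blast
    have "{u,s} \<in> E" using e u by (simp add: insert_commute)
    hence "u \<in> closed_nbhd E S" using s unfolding closed_nbhd_def by blast
    moreover have "s \<in> closed_nbhd E S" using s unfolding closed_nbhd_def by blast
    ultimately have "e \<subseteq> closed_nbhd E S" using u by blast
    thus "e \<in> {e \<in> induced_edges E (closed_nbhd E S). s \<in> e}" using e unfolding induced_edges_def by blast
  qed
qed

lemma nb_Delta:
  assumes sg: "simple_graph V E" and SC: "S \<subseteq> core V E" and Sne: "S \<noteq> {}"
  shows "max_degree (closed_nbhd E S) (induced_edges E (closed_nbhd E S)) = max_degree V E"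
proof (rule antisym)
  note nb = nb_basic[OF sg SC]
  have finV: "finite V" using sg unfolding simple_graph_def by simp
  show "max_degree (closed_nbhd E S) (induced_edges E (closed_nbhd E S)) \<le> max_degree V E"
  proof (rule max_degree_le[OF nb(2)])
    fix v assume v: "v \<in> closed_nbhd E S"
    have "degree (induced_edges E (closed_nbhd E S)) v \<le> degree E v"
      by (rule degree_mono'[OF sg_finE[OF sg] nb(3)])
    also have "\<dots> \<le> max_degree V E" using degree_le_max[OF finV] nb(1) v by blast
    finally show "degree (induced_edges E (closed_nbhd E S)) v \<le> max_degree V E" .
  qed
  obtain s where s: "s \<in> S" using Sne by blast
  have "degree (induced_edges E (closed_nbhd E S)) s = degree E s"
    unfolding degree_def using nb_edges[OF sg s] by simp
  also have "\<dots> = max_degree V E" using SC s unfolding core_def by blast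
  finally have "max_degree V E = degree (induced_edges E (closed_nbhd E S)) s" by simp
  also have "\<dots> \<le> max_degree (closed_nbhd E S) (induced_edges E (closed_nbhd E S))"
    using degree_le_max[OF nb(2)] nb(5) s by blast
  finally show "max_degree V E \<le> max_degree (closed_nbhd E S) (induced_edges E (closed_nbhd E S))" .
qed

lemma nb_core:
  assumes sg: "simple_graph V E" and SC: "S \<subseteq> core V E" and Sne: "S \<noteq> {}"
    and v: "v \<in> core (closed_nbhd E S) (induced_edges E (closed_nbhd E S))"
  shows "{e \<in> induced_edges E (closed_nbhd E S). v \<in> e} = {e\<in>E. v \<in> e}" "v \<in> core V E"
proof -
  note nb = nb_basic[OF sg SC]
  have finV: "finite V" using sg unfolding simple_graph_def by simp
  have finE: "finite E" using sg_finE[OF sg] .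
  have vN: "v \<in> closed_nbhd E S" and dv: "degree (induced_edges E (closed_nbhd E S)) v = max_degree V E"
    using v nb_Delta[OF sg SC Sne] unfolding core_def by auto
  have vV: "v \<in> V" using vN nb(1) by blast
  have sub: "{e \<in> induced_edges E (closed_nbhd E S). v \<in> e} \<subseteq> {e\<in>E. v \<in> e}" using nb(3) by blast
  have le1: "degree E v \<le> max_degree V E" using degree_le_max[OF finV vV] .
  have le2: "degree (induced_edges E (closed_nbhd E S)) v \<le> degree E v" by (rule degree_mono'[OF finE nb(3)])
  have eqd: "degree (induced_edges E (closed_nbhd E S)) v = degree E v" using le1 le2 dv by simp
  show "{e \<in> induced_edges E (closed_nbhd E S). v \<in> e} = {e\<in>E. v \<in> e}"
    using card_subset_eq[OF _ sub] finE eqd unfolding degree_def by simp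
  show "v \<in> core V E" using vV le1 le2 dv unfolding core_def by simp
qed

lemma es_le:
  assumes "R \<subseteq> F" "max_degree N (F - R) = max_degree N F - 1"
  shows "es_delta N F \<le> card R"
  unfolding es_delta_def by (rule Least_le) (use assms in blast)

lemma one_to_three:
  assumes sg: "simple_graph V E" and ne: "E \<noteq> {}" and M: "matching E M" "saturates M (core V E)"
    and SC: "S \<subseteq> core V E"
  shows "real (es_delta (closed_nbhd E S) (induced_edges E (closed_nbhd E S))) \<le> real (card (closed_nbhd E S)) / 2"
proof (cases "S = {}")
  case True
  have "closed_nbhd E S = {}" unfolding closed_nbhd_def using True by simp
  moreover have "es_delta {} (induced_edges E {}) \<le> card ({} :: 'a set set)"
    by (rule es_le) (simp_all add: max_degree_empty max_degree_def)
  ultimately show ?thesis by simp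
next
  case False
  define Nb where "Nb = closed_nbhd E S"
  define EH where "EH = induced_edges E Nb"
  note nb = nb_basic[OF sg SC, folded Nb_def, folded EH_def]
  have DH: "max_degree Nb EH = max_degree V E" using nb_Delta[OF sg SC False] unfolding Nb_def EH_def .
  have finE: "finite E" using sg_finE[OF sg] .
  have ME: "M \<subseteq> E" and vmM: "vm M" using M(1) unfolding matching_vm by auto
  define MH where "MH = {e \<in> M. \<exists>v\<in>core Nb EH. v \<in> e}"
  have MHEH: "MH \<subseteq> EH"
  proof
    fix e assume "e \<in> MH"
    then obtain v where v: "v \<in> core Nb EH" "e \<in> M" "v \<in> e" unfolding MH_def by blast
    have "{e \<in> EH. v \<in> e} = {e\<in>E. v \<in> e}" using nb_core(1)[OF sg SC False] v(1) unfolding Nb_def EH_def by blast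
    thus "e \<in> EH" using v ME by blast
  qed
  have finMH: "finite MH" using MHEH nb(4) finite_subset by blast
  have satv: "\<exists>e\<in>M. v \<in> e" if "v \<in> core V E" for v using M(2) that unfolding saturates_def by blast
  have "max_degree Nb (EH - MH) \<le> max_degree V E - 1"
  proof (rule max_degree_le[OF nb(2)])
    fix v assume vN: "v \<in> Nb"
    have le: "degree EH v \<le> max_degree V E" using degree_le_max[OF nb(2) vN, of EH] DH by simp
    show "degree (EH - MH) v \<le> max_degree V E - 1"
    proof (cases "v \<in> core Nb EH")
      case True
      have "v \<in> core V E" using nb_core(2)[OF sg SC False] True unfolding Nb_def EH_def by blast
      then obtain e where e: "e \<in> M" "v \<in> e" using satv by blast
      hence "e \<in> MH" using True unfolding MH_def by blast
      hence "degree (EH - MH) v < degree EH v" using degree_diff_less[OF nb(4) MHEH] e(2) by blast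
      thus ?thesis using le by simp
    next
      case False
      hence "degree EH v \<noteq> max_degree V E" using vN DH unfolding core_def by simp
      hence "degree EH v < max_degree V E" using le by simp
      moreover have "degree (EH - MH) v \<le> degree EH v" by (rule degree_mono'[OF nb(4)]) blast
      ultimately show ?thesis by simp
    qed
  qed
  moreover have "max_degree V E - 1 \<le> max_degree Nb (EH - MH)"
  proof -
    obtain s where s: "s \<in> S" using False by blast
    have sN: "s \<in> Nb" using s nb(5) by blast
    have eqs: "{e \<in> EH. s \<in> e} = {e\<in>E. s \<in> e}" using nb_edges[OF sg s] unfolding Nb_def EH_def .
    have ds: "degree EH s = max_degree V E" using eqs SC s unfolding degree_def core_def by auto
    hence sc: "s \<in> core Nb EH" using sN DH unfolding core_def by simp
    obtain es where es: "es \<in> M" "s \<in> es" using satv SC s by blast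
    have esMH: "es \<in> MH" using es sc unfolding MH_def by blast
    have esEH: "es \<in> EH" using esMH MHEH by blast
    have "{e \<in> EH - MH. s \<in> e} = {e \<in> EH. s \<in> e} - {es}"
    proof
      show "{e \<in> EH - MH. s \<in> e} \<subseteq> {e \<in> EH. s \<in> e} - {es}" using esMH by blast
      show "{e \<in> EH. s \<in> e} - {es} \<subseteq> {e \<in> EH - MH. s \<in> e}"
      proof
        fix e assume e: "e \<in> {e \<in> EH. s \<in> e} - {es}"
        have "e \<notin> MH"
        proof
          assume "e \<in> MH"
          hence "e \<in> M" unfolding MH_def by blast
          hence "e = es" using vmD[OF vmM _ es(1)] e es(2) by blast
          thus False using e by blast
        qed
        thus "e \<in> {e \<in> EH - MH. s \<in> e}" using e by blast
      qed
    qed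
    hence "degree (EH - MH) s = degree EH s - 1"
      unfolding degree_def using esEH es(2) nb(4) by (simp add: card_Diff_singleton)
    hence "degree (EH - MH) s = max_degree V E - 1" using ds by simp
    thus ?thesis using degree_le_max[OF nb(2) sN, of "EH - MH"] by simp
  qed
  ultimately have "max_degree Nb (EH - MH) = max_degree Nb EH - 1" using DH by simp
  hence es: "es_delta Nb EH \<le> card MH" by (rule es_le[OF MHEH])
  have "card (\<Union>MH) = 2 * card MH"
  proof (rule matching_card_Union[OF finMH])
    show "\<forall>e\<in>MH. card e = 2" using MHEH nb(3) sg unfolding simple_graph_def by blast
    show "\<forall>e1\<in>MH. \<forall>e2\<in>MH. e1 \<noteq> e2 \<longrightarrow> e1 \<inter> e2 = {}" using M(1) unfolding matching_def MH_def by blast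
  qed
  moreover have "card (\<Union>MH) \<le> card Nb"
  proof (rule card_mono[OF nb(2)])
    show "\<Union>MH \<subseteq> Nb" using MHEH unfolding EH_def induced_edges_def by blast
  qed
  ultimately have "2 * card MH \<le> card Nb" by simp
  hence "2 * es_delta Nb EH \<le> card Nb" using es by linarith
  hence "real (2 * es_delta Nb EH) \<le> real (card Nb)" by (simp only: of_nat_le_iff)
  thus ?thesis unfolding Nb_def[symmetric] EH_def[symmetric] by simp
qed

lemma degree_insert_le: "finite F \<Longrightarrow> degree (insert e F) v \<le> Suc (degree F v)"
proof -
  assume "finite F"
  have "{x\<in>insert e F. v\<in>x} \<subseteq> insert e {x\<in>F. v\<in>x}" by blast
  hence "card {x\<in>insert e F. v\<in>x} \<le> card (insert e {x\<in>F. v\<in>x})" using \<open>finite F\<close> by (intro card_mono) auto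
  also have "\<dots> \<le> Suc (card {x\<in>F. v\<in>x})" using \<open>finite F\<close> by (simp add: card_insert_if)
  finally show ?thesis unfolding degree_def .
qed

lemma es_witness:
  assumes finN: "finite N" and finF: "finite F" and D1: "max_degree N F \<ge> 1" and FN: "\<forall>e\<in>F. e \<subseteq> N"
  shows "\<exists>R. R \<subseteq> F \<and> card R = es_delta N F \<and> max_degree N (F - R) = max_degree N F - 1"
proof -
  define RR where "RR = {R. R \<subseteq> F \<and> max_degree N (F - R) \<le> max_degree N F - 1}"
  have finRR: "finite RR" unfolding RR_def by (rule finite_subset[of _ "Pow F"]) (use finF in auto)
  have FRR: "F \<in> RR" unfolding RR_def using max_degree_empty[OF finN] by simp
  have "Min (card ` RR) \<in> card ` RR" using finRR FRR by (intro Min_in) auto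
  then obtain Rm where Rm: "Rm \<in> RR" "card Rm = Min (card ` RR)" by (metis imageE)
  have minc: "card Rm \<le> card R" if "R \<in> RR" for R using Rm(2) finRR that by simp
  have RmF: "Rm \<subseteq> F" and Rmle: "max_degree N (F - Rm) \<le> max_degree N F - 1" using Rm(1) unfolding RR_def by auto
  have finRm: "finite Rm" using RmF finF finite_subset by blast
  have "Rm \<noteq> {}"
  proof
    assume "Rm = {}"
    hence "max_degree N F \<le> max_degree N F - 1" using Rmle by simp
    thus False using D1 by simp
  qed
  then obtain e where e: "e \<in> Rm" by blast
  have "Rm - {e} \<notin> RR"
  proof
    assume "Rm - {e} \<in> RR"
    hence "card Rm \<le> card (Rm - {e})" by (rule minc)
    moreover have "card (Rm - {e}) < card Rm" by (rule card_Diff1_less[OF finRm e])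
    ultimately show False by simp
  qed
  hence "\<not> max_degree N (F - (Rm - {e})) \<le> max_degree N F - 1" using RmF unfolding RR_def by blast
  then obtain v where v: "v \<in> N" "\<not> degree (F - (Rm - {e})) v \<le> max_degree N F - 1"
    using max_degree_le[OF finN, of "F - (Rm - {e})" "max_degree N F - 1"] by blast
  have "F - (Rm - {e}) = insert e (F - Rm)" using e RmF by blast
  hence "degree (F - (Rm - {e})) v \<le> Suc (degree (F - Rm) v)" using degree_insert_le[of "F - Rm" e v] finF by simp
  hence "max_degree N F - 1 \<le> degree (F - Rm) v" using v(2) by simp
  also have "\<dots> \<le> max_degree N (F - Rm)" by (rule degree_le_max[OF finN v(1)])
  finally have eqm: "max_degree N (F - Rm) = max_degree N F - 1" using Rmle by simp
  have ex: "\<exists>R. R \<subseteq> F \<and> card R = card Rm \<and> max_degree N (F - R) = max_degree N F - 1"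
    using RmF eqm by blast
  show ?thesis unfolding es_delta_def by (rule LeastI_ex) (use ex in blast)
qed

lemma three_to_one:
  assumes sg: "simple_graph V E" and ne: "E \<noteq> {}"
    and P3: "\<forall>S \<subseteq> core V E. real (es_delta (closed_nbhd E S) (induced_edges E (closed_nbhd E S))) \<le> real (card (closed_nbhd E S)) / 2"
  shows "\<exists>M. matching E M \<and> saturates M (core V E)"
proof -
  have finV: "finite V" using sg unfolding simple_graph_def by simp
  have finE: "finite E" using sg_finE[OF sg] .
  have coreV: "core V E \<subseteq> V" unfolding core_def by blast
  have "condC E (core V E)"
    unfolding condC_def
  proof (intro allI impI)
    fix S assume SC: "S \<subseteq> core V E"
    show "\<exists>N. matching E N \<and> \<Union>N \<subseteq> S \<and> card S \<le> 2 * card N + card (bd E S)"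
    proof (cases "S = {}")
      case True
      then show ?thesis unfolding matching_def by (intro exI[of _ "{}"]) simp
    next
      case False
      define Nb where "Nb = closed_nbhd E S"
      define EH where "EH = induced_edges E Nb"
      note nb = nb_basic[OF sg SC, folded Nb_def, folded EH_def]
      have DH: "max_degree Nb EH = max_degree V E" using nb_Delta[OF sg SC False] unfolding Nb_def EH_def .
      have D1: "max_degree Nb EH \<ge> 1" using DH Delta_pos[OF sg ne] by simp
      have EHN: "\<forall>e\<in>EH. e \<subseteq> Nb" unfolding EH_def induced_edges_def by blast
      obtain R where R: "R \<subseteq> EH" "card R = es_delta Nb EH" "max_degree Nb (EH - R) = max_degree Nb EH - 1"
        using es_witness[OF nb(2) nb(4) D1 EHN] by blast
      have finR: "finite R" using R(1) nb(4) finite_subset by blast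
      have RE: "R \<subseteq> E" using R(1) nb(3) by blast
      have Rc: "\<forall>e\<in>R. card e = 2" using RE sg unfolding simple_graph_def by blast
      have cov: "\<forall>v\<in>S. \<exists>e\<in>R. v \<in> e"
      proof
        fix s assume s: "s \<in> S"
        have sN: "s \<in> Nb" using s nb(5) by blast
        have "degree EH s = degree E s" unfolding degree_def using nb_edges[OF sg s] unfolding Nb_def EH_def by simp
        also have "\<dots> = max_degree V E" using SC s unfolding core_def by blast
        finally have ds: "degree EH s = max_degree Nb EH" using DH by simp
        have "degree (EH - R) s \<le> max_degree Nb (EH - R)" by (rule degree_le_max[OF nb(2) sN])
        hence "degree (EH - R) s < degree EH s" using R(3) ds D1 by simp
        thus "\<exists>e\<in>R. s \<in> e" using degree_diff_less[OF nb(4) R(1)] by blast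
      qed
      have finS: "finite S" using nb(2) nb(5) finite_subset by blast
      obtain N where N: "matching E N" "\<Union>N \<subseteq> S" "card S \<le> card R + card N"
        using cover_matching[OF finR RE Rc finS cov] by blast
      have "real (es_delta Nb EH) \<le> real (card Nb) / 2" using P3 SC unfolding Nb_def EH_def by blast
      hence c2: "2 * card R \<le> card Nb" using R(2) by linarith
      have NbU: "Nb = S \<union> bd E S" unfolding Nb_def closed_nbhd_def bd_def by blast
      have "S \<inter> bd E S = {}" unfolding bd_def by blast
      moreover have "finite (bd E S)" using NbU nb(2) by (metis finite_Un)
      ultimately have "card Nb = card S + card (bd E S)" using NbU finS by (simp add: card_Un_disjoint)
      hence "card S \<le> 2 * card N + card (bd E S)" using c2 N(3) by linarith
      thus ?thesis using N(1,2) by blast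
    qed
  qed
  hence "sat E (core V E)" by (rule tutte_X[OF finV sg_K2[OF sg] coreV])
  thus ?thesis unfolding sat_def .
qed

theorem theorem2p3:
  fixes V :: "'a set" and E :: "'a set set"
  assumes "simple_graph V E" and "E \<noteq> {}"
  shows "((\<exists>M. matching E M \<and> saturates M (core V E))
            \<longleftrightarrow> (\<exists>S. min_mitigating_set V E S \<and> matching E S))
       \<and> ((\<exists>S. min_mitigating_set V E S \<and> matching E S)
            \<longleftrightarrow> (\<forall>S \<subseteq> core V E.
                   real (es_delta (closed_nbhd E S) (induced_edges E (closed_nbhd E S)))
                     \<le> real (card (closed_nbhd E S)) / 2))"
proof -
  let ?P1 = "\<exists>M. matching E M \<and> saturates M (core V E)"
  let ?P2 = "\<exists>S. min_mitigating_set V E S \<and> matching E S"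
  let ?P3 = "\<forall>S \<subseteq> core V E. real (es_delta (closed_nbhd E S) (induced_edges E (closed_nbhd E S))) \<le> real (card (closed_nbhd E S)) / 2"
  have 12: "?P1 \<Longrightarrow> ?P2" using one_to_two[OF assms] by blast
  have 21: "?P2 \<Longrightarrow> ?P1"
  proof -
    assume ?P2
    then obtain S where S: "min_mitigating_set V E S" "matching E S" by blast
    have mS: "mitigating_set V E S" using S(1) unfolding min_mitigating_set_def by simp
    have SE: "S \<subseteq> E" using mS unfolding mitigating_set_def by simp
    have "\<forall>v\<in>core V E. \<exists>e\<in>S. v \<in> e" using mitigating_iff[OF assms SE] mS by simp
    thus ?P1 using S(2) unfolding saturates_def by blast
  qed
  have 13: "?P1 \<Longrightarrow> ?P3"
  proof -
    assume ?P1
    then obtain M where M: "matching E M" "saturates M (core V E)" by blast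
    show ?P3 using one_to_three[OF assms M] by blast
  qed
  have 31: "?P3 \<Longrightarrow> ?P1" using three_to_one[OF assms] by blast
  show ?thesis using 12 21 13 31 by blast
qed

end
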